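(* Let $(W,S)$ be an irreducible finite Coxeter system which is not of rank two with $m_{s,t}$ even (i.e. $B_W$ is not of the form $\langle a,b\mid (ab)^m=(ba)^m\rangle$ with $m\geq 2$), and let $B_W$ be the associated Artin–Tits group. Then (i) $\Gamma_1(B_W)/\Gamma_2(B_W)$ is isomorphic to $\mathbb{Z}$ or $\mathbb{Z}^2$, and (ii) $\Gamma_2(B_W)=\Gamma_3(B_W)$.
   Context: For a Coxeter system $(W,S)$, $m_{s,t}$ denotes the order of $st$ in $W$. The Artin–Tits group is $B_W=\langle S\mid \underbrace{sts\cdots}_{m_{s,t}}=\underbrace{tst\cdots}_{m_{s,t}} \text{ for all } s\neq t\in S \text{ with } m_{s,t}<\infty\rangle$; it is of spherical type when $W$ is finite. $\Gamma_1(G)=G$, $\Gamma_i(G)=[G,\Gamma_{i-1}(G)]$. *)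

theory Defs
  imports "HOL-Algebra.Algebra"
begin

text \<open>Words in the generators and their inverses: a letter is (s, True) for s
  and (s, False) for s^-1.\<close>
type_synonym 'a word = "('a \<times> bool) list"

definition words :: "'a set \<Rightarrow> 'a word set" where
  "words S = {w. \<forall>x\<in>set w. fst x \<in> S}"

inductive_set pres_eq :: "'a set \<Rightarrow> ('a word \<times> 'a word) set \<Rightarrow> ('a word \<times> 'a word) set"
  for S R where
  refl: "w \<in> words S \<Longrightarrow> (w, w) \<in> pres_eq S R"
| sym: "(u, v) \<in> pres_eq S R \<Longrightarrow> (v, u) \<in> pres_eq S R"
| trans: "(u, v) \<in> pres_eq S R \<Longrightarrow> (v, w) \<in> pres_eq S R \<Longrightarrow> (u, w) \<in> pres_eq S R"
| cancel: "u \<in> words S \<Longrightarrow> v \<in> words S \<Longrightarrow> x \<in> S \<Longrightarrow>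
     (u @ [(x, b), (x, \<not> b)] @ v, u @ v) \<in> pres_eq S R"
| rel: "(l, r) \<in> R \<Longrightarrow> u \<in> words S \<Longrightarrow> v \<in> words S \<Longrightarrow>
     (u @ l @ v, u @ r @ v) \<in> pres_eq S R"

definition presented_group :: "'a set \<Rightarrow> ('a word \<times> 'a word) set \<Rightarrow> 'a word set monoid" where
  "presented_group S R =
    \<lparr>carrier = {pres_eq S R `` {w} | w. w \<in> words S},
     monoid.mult = (\<lambda>A B. \<Union>a\<in>A. \<Union>b\<in>B. pres_eq S R `` {a @ b}),
     one = pres_eq S R `` {[]}\<rparr>"

fun alt :: "'a \<Rightarrow> 'a \<Rightarrow> nat \<Rightarrow> 'a word" where
  "alt s t 0 = []"
| "alt s t (Suc n) = (s, True) # alt t s n"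

text \<open>Coxeter matrix on S; the value 0 encodes m_{s,t} = \<infinity>.\<close>
definition coxeter_matrix :: "'a set \<Rightarrow> ('a \<Rightarrow> 'a \<Rightarrow> nat) \<Rightarrow> bool" where
  "coxeter_matrix S M \<longleftrightarrow>
     (\<forall>s\<in>S. M s s = 1) \<and>
     (\<forall>s\<in>S. \<forall>t\<in>S. M s t = M t s) \<and>
     (\<forall>s\<in>S. \<forall>t\<in>S. s \<noteq> t \<longrightarrow> (M s t = 0 \<or> M s t \<ge> 2))"

definition braid_rels :: "'a set \<Rightarrow> ('a \<Rightarrow> 'a \<Rightarrow> nat) \<Rightarrow> ('a word \<times> 'a word) set" where
  "braid_rels S M = {(alt s t (M s t), alt t s (M s t)) | s t. s \<in> S \<and> t \<in> S \<and> s \<noteq> t \<and> M s t \<noteq> 0}"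

text \<open>Coxeter group W: s^2 = 1 plus braid relations (equivalent to (st)^m = 1).\<close>
definition coxeter_group :: "'a set \<Rightarrow> ('a \<Rightarrow> 'a \<Rightarrow> nat) \<Rightarrow> 'a word set monoid" where
  "coxeter_group S M =
     presented_group S (braid_rels S M \<union> {([(s, True), (s, True)], []) | s. s \<in> S})"

definition artin_tits_group :: "'a set \<Rightarrow> ('a \<Rightarrow> 'a \<Rightarrow> nat) \<Rightarrow> 'a word set monoid" where
  "artin_tits_group S M = presented_group S (braid_rels S M)"

definition coxeter_irreducible :: "'a set \<Rightarrow> ('a \<Rightarrow> 'a \<Rightarrow> nat) \<Rightarrow> bool" where
  "coxeter_irreducible S M \<longleftrightarrow> S \<noteq> {} \<and>
     (\<forall>s\<in>S. \<forall>t\<in>S. (s, t) \<in> ({(x, y). x \<in> S \<and> y \<in> S \<and> x \<noteq> y \<and> M x y \<noteq> 2})\<^sup>*)"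

text \<open>Lower central series, 1-indexed: Gamma_1 = G, Gamma_{i+1} = [G, Gamma_i].
  (Index 0 is set equal to G as well.)\<close>
fun lower_central :: "('g, 'b) monoid_scheme \<Rightarrow> nat \<Rightarrow> 'g set" where
  "lower_central G 0 = carrier G"
| "lower_central G (Suc 0) = carrier G"
| "lower_central G (Suc (Suc n)) =
     generate G {x \<otimes>\<^bsub>G\<^esub> y \<otimes>\<^bsub>G\<^esub> inv\<^bsub>G\<^esub> x \<otimes>\<^bsub>G\<^esub> inv\<^bsub>G\<^esub> y | x y.
                 x \<in> carrier G \<and> y \<in> lower_central G (Suc n)}"

end

theory Submission
  imports Defs Complex_Main
begin

lemma words_append[simp]: "u @ v \<in> words S \<longleftrightarrow> u \<in> words S \<and> v \<in> words S"
  by (auto simp: words_def)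

lemma words_Cons[simp]: "x # v \<in> words S \<longleftrightarrow> fst x \<in> S \<and> v \<in> words S"
  by (auto simp: words_def)

lemma words_Nil[simp]: "[] \<in> words S"
  by (auto simp: words_def)

definition winv :: "'a word \<Rightarrow> 'a word" where
  "winv w = rev (map (\<lambda>(x, b). (x, \<not> b)) w)"

lemma winv_Nil[simp]: "winv [] = []" by (simp add: winv_def)
lemma winv_Cons[simp]: "winv ((x,b) # w) = winv w @ [(x, \<not> b)]" by (simp add: winv_def)
lemma winv_words[simp]: "winv w \<in> words S \<longleftrightarrow> w \<in> words S"
  by (auto simp: winv_def words_def)

locale pres =
  fixes S :: "'a set" and R :: "('a word \<times> 'a word) set"
  assumes R_words: "(l, r) \<in> R \<Longrightarrow> l \<in> words S \<and> r \<in> words S"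
begin

abbreviation E where "E \<equiv> pres_eq S R"
abbreviation G where "G \<equiv> presented_group S R"
definition cl :: "'a word \<Rightarrow> 'a word set" where "cl w = E `` {w}"

lemma E_words: "(u, v) \<in> E \<Longrightarrow> u \<in> words S \<and> v \<in> words S"
  by (induction rule: pres_eq.induct) (auto dest: R_words)

lemma E_cong_left: "(u, v) \<in> E \<Longrightarrow> w \<in> words S \<Longrightarrow> (w @ u, w @ v) \<in> E"
proof (induction rule: pres_eq.induct)
  case (refl w') then show ?case by (auto intro: pres_eq.refl)
next
  case (sym u v) then show ?case by (auto intro: pres_eq.sym)
next
  case (trans u v w') then show ?case by (auto intro: pres_eq.trans)
next
  case (cancel u v x b) then show ?case
    using pres_eq.cancel[of "w @ u" S v x b R] by simp
next
  case (rel l r u v) then show ?case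
    using pres_eq.rel[of l r R "w @ u" S v] by simp
qed

lemma E_cong_right: "(u, v) \<in> E \<Longrightarrow> w \<in> words S \<Longrightarrow> (u @ w, v @ w) \<in> E"
proof (induction rule: pres_eq.induct)
  case (refl w') then show ?case by (auto intro: pres_eq.refl)
next
  case (sym u v) then show ?case by (auto intro: pres_eq.sym)
next
  case (trans u v w') then show ?case by (auto intro: pres_eq.trans)
next
  case (cancel u v x b) then show ?case
    using pres_eq.cancel[of u S "v @ w" x b R] by simp
next
  case (rel l r u v) then show ?case
    using pres_eq.rel[of l r R u S "v @ w"] by simp
qed

lemma E_cong: "(u, v) \<in> E \<Longrightarrow> (u', v') \<in> E \<Longrightarrow> (u @ u', v @ v') \<in> E"
  by (meson E_cong_left E_cong_right E_words pres_eq.trans)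

lemma cl_eq_iff: "u \<in> words S \<Longrightarrow> cl u = cl v \<longleftrightarrow> (u, v) \<in> E"
  unfolding cl_def
  by (auto intro: pres_eq.refl pres_eq.sym pres_eq.trans)

lemma cl_eqI: "(u, v) \<in> E \<Longrightarrow> cl u = cl v"
  using cl_eq_iff E_words by blast

lemma mem_cl_self: "u \<in> words S \<Longrightarrow> u \<in> cl u"
  by (simp add: cl_def pres_eq.refl)

lemma carrier_G: "carrier G = cl ` words S"
  by (auto simp: presented_group_def cl_def)

lemma one_G: "\<one>\<^bsub>G\<^esub> = cl []"
  by (simp add: presented_group_def cl_def)

lemma mult_G: "u \<in> words S \<Longrightarrow> v \<in> words S \<Longrightarrow> cl u \<otimes>\<^bsub>G\<^esub> cl v = cl (u @ v)"
proof -
  assume u: "u \<in> words S" and v: "v \<in> words S"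
  have "(\<Union>a\<in>cl u. \<Union>b\<in>cl v. E `` {a @ b}) = cl (u @ v)"
  proof -
    have "E `` {a @ b} = cl (u @ v)" if "a \<in> cl u" "b \<in> cl v" for a b
    proof -
      have "(u, a) \<in> E" "(v, b) \<in> E" using that by (auto simp: cl_def)
      then have "(a @ b, u @ v) \<in> E" using E_cong pres_eq.sym by blast
      then show ?thesis using cl_eqI unfolding cl_def by blast
    qed
    then show ?thesis using mem_cl_self[OF u] mem_cl_self[OF v] by blast
  qed
  then show ?thesis by (simp add: presented_group_def cl_def)
qed

lemma winv_cancel: "w \<in> words S \<Longrightarrow> (winv w @ w, []) \<in> E"
proof (induction w)
  case Nil then show ?case by (simp add: pres_eq.refl)
next
  case (Cons a w)
  obtain x b where a: "a = (x, b)" by (cases a)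
  have xS: "x \<in> S" and w: "w \<in> words S" using Cons.prems a by auto
  have "(winv w @ [(x, \<not> b), (x, \<not> \<not> b)] @ w, winv w @ w) \<in> E"
    by (rule pres_eq.cancel) (use xS w in auto)
  then have "(winv (a # w) @ (a # w), winv w @ w) \<in> E" using a by simp
  then show ?case using Cons pres_eq.trans w by blast
qed

lemma group_G: "group G"
proof (rule groupI)
  fix x y assume "x \<in> carrier G" "y \<in> carrier G"
  then show "x \<otimes>\<^bsub>G\<^esub> y \<in> carrier G"
    by (auto simp: carrier_G mult_G)
next
  show "\<one>\<^bsub>G\<^esub> \<in> carrier G" by (auto simp: carrier_G one_G)
next
  fix x y z assume "x \<in> carrier G" "y \<in> carrier G" "z \<in> carrier G"
  then show "x \<otimes>\<^bsub>G\<^esub> y \<otimes>\<^bsub>G\<^esub> z = x \<otimes>\<^bsub>G\<^esub> (y \<otimes>\<^bsub>G\<^esub> z)"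
    by (auto simp: carrier_G mult_G)
next
  fix x assume "x \<in> carrier G"
  then show "\<one>\<^bsub>G\<^esub> \<otimes>\<^bsub>G\<^esub> x = x"
    by (auto simp: carrier_G mult_G one_G)
next
  fix x assume "x \<in> carrier G"
  then obtain w where w: "w \<in> words S" "x = cl w" by (auto simp: carrier_G)
  have "cl (winv w) \<otimes>\<^bsub>G\<^esub> x = \<one>\<^bsub>G\<^esub>"
    using w winv_cancel[OF w(1)] by (simp add: mult_G one_G cl_eqI)
  moreover have "cl (winv w) \<in> carrier G" using w by (simp add: carrier_G)
  ultimately show "\<exists>y\<in>carrier G. y \<otimes>\<^bsub>G\<^esub> x = \<one>\<^bsub>G\<^esub>" by blast
qed

lemma cl_carrier[simp]: "w \<in> words S \<Longrightarrow> cl w \<in> carrier G"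
  by (simp add: carrier_G)

lemma inv_cl: "w \<in> words S \<Longrightarrow> inv\<^bsub>G\<^esub> (cl w) = cl (winv w)"
  using group.inv_equality[OF group_G, of "cl (winv w)" "cl w"] winv_cancel
  by (simp add: mult_G one_G cl_eqI)

lemma cl_Cons: "fst a \<in> S \<Longrightarrow> w \<in> words S \<Longrightarrow> cl (a # w) = cl [a] \<otimes>\<^bsub>G\<^esub> cl w"
  by (simp add: mult_G)

lemma cl_False: "x \<in> S \<Longrightarrow> cl [(x, False)] = inv\<^bsub>G\<^esub> (cl [(x, True)])"
  by (simp add: inv_cl)

lemma cl_rel: "(l, r) \<in> R \<Longrightarrow> cl l = cl r"
  using pres_eq.rel[of l r R "[]" S "[]"] by (simp add: cl_eqI)

end

definition S2 :: "real \<Rightarrow> real \<times> real \<Rightarrow> real \<times> real" where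
  "S2 c = (\<lambda>(p, q). (- p, q + 2 * c * p))"
definition T2 :: "real \<Rightarrow> real \<times> real \<Rightarrow> real \<times> real" where
  "T2 c = (\<lambda>(p, q). (p + 2 * c * q, - q))"

fun alt2 :: "('b \<Rightarrow> 'b) \<Rightarrow> ('b \<Rightarrow> 'b) \<Rightarrow> nat \<Rightarrow> 'b \<Rightarrow> 'b" where
  "alt2 f g 0 = id"
| "alt2 f g (Suc n) = f \<circ> alt2 g f n"

definition sw :: "real \<times> real \<Rightarrow> real \<times> real" where "sw = (\<lambda>(p, q). (q, p))"

lemma T2_sw: "T2 c = sw \<circ> S2 c \<circ> sw"
  by (auto simp: T2_def S2_def sw_def fun_eq_iff)

lemma sw_sw: "sw (sw z) = z" by (auto simp: sw_def split: prod.splits)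

lemma T2_pt: "T2 c z = sw (S2 c (sw z))"
  by (auto simp: T2_def S2_def sw_def split: prod.splits)
lemma S2_pt: "S2 c z = sw (T2 c (sw z))"
  by (auto simp: T2_def S2_def sw_def split: prod.splits)

lemma alt2_sw_pt: "alt2 (T2 c) (S2 c) n z = sw (alt2 (S2 c) (T2 c) n (sw z))
              \<and> alt2 (S2 c) (T2 c) n z = sw (alt2 (T2 c) (S2 c) n (sw z))"
proof (induction n arbitrary: z)
  case 0 then show ?case by (simp add: sw_sw)
next
  case (Suc n)
  have "alt2 (T2 c) (S2 c) (Suc n) z = T2 c (alt2 (S2 c) (T2 c) n z)" by simp
  also have "\<dots> = T2 c (sw (alt2 (T2 c) (S2 c) n (sw z)))" using Suc[of z] by simp
  also have "\<dots> = sw (S2 c (alt2 (T2 c) (S2 c) n (sw z)))" by (simp add: T2_pt[of c] sw_sw)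
  also have "\<dots> = sw (alt2 (S2 c) (T2 c) (Suc n) (sw z))" by simp
  finally have 1: "alt2 (T2 c) (S2 c) (Suc n) z = sw (alt2 (S2 c) (T2 c) (Suc n) (sw z))" .
  have "alt2 (S2 c) (T2 c) (Suc n) z = S2 c (alt2 (T2 c) (S2 c) n z)" by simp
  also have "\<dots> = S2 c (sw (alt2 (S2 c) (T2 c) n (sw z)))" using Suc[of z] by simp
  also have "\<dots> = sw (T2 c (alt2 (S2 c) (T2 c) n (sw z)))" by (simp add: S2_pt[of c] sw_sw)
  also have "\<dots> = sw (alt2 (T2 c) (S2 c) (Suc n) (sw z))" by simp
  finally have 2: "alt2 (S2 c) (T2 c) (Suc n) z = sw (alt2 (T2 c) (S2 c) (Suc n) (sw z))" .
  show ?case using 1 2 by blast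
qed

definition UU :: "real \<Rightarrow> real \<Rightarrow> real" where "UU th x = sin (x * th) / sin th"

lemma UU_rec: "sin th \<noteq> 0 \<Longrightarrow> UU th (x + 1) = 2 * cos th * UU th x - UU th (x - 1)"
proof -
  assume h: "sin th \<noteq> 0"
  have "sin ((x + 1) * th) + sin ((x - 1) * th) = 2 * cos th * sin (x * th)"
    by (simp add: distrib_right left_diff_distrib sin_add sin_diff)
  then show ?thesis using h by (simp add: UU_def field_simps)
qed

lemma alt2_closed:
  assumes "sin th \<noteq> 0"
  shows "alt2 (S2 (cos th)) (T2 (cos th)) n (p, q) =
    (if even n then (- UU th (real n - 1) * p - UU th (real n) * q, UU th (real n) * p + UU th (real n + 1) * q)
     else (- UU th (real n) * p - UU th (real n - 1) * q, UU th (real n + 1) * p + UU th (real n) * q))"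
proof (induction n arbitrary: p q)
  case 0
  have "UU th 1 = 1" "UU th (-1) = -1" "UU th 0 = 0" using assms by (auto simp: UU_def)
  then show ?case by simp
next
  case (Suc n)
  let ?c = "cos th"
  have r1: "UU th (real n + 1) = 2 * ?c * UU th (real n) - UU th (real n - 1)"
    using UU_rec[OF assms] by simp
  have r2: "UU th (real n + 2) = 2 * ?c * UU th (real n + 1) - UU th (real n)"
    using UU_rec[OF assms, of "real n + 1"] by (simp add: add.assoc)
  have st: "alt2 (S2 ?c) (T2 ?c) (Suc n) (p, q) = S2 ?c (sw (alt2 (S2 ?c) (T2 ?c) n (q, p)))"
    using conjunct1[OF alt2_sw_pt[of ?c n "(p, q)"]] by (simp add: sw_def)
  have rs: "real (Suc n) = real n + 1" "real (Suc n) - 1 = real n" "real (Suc n) + 1 = real n + 2"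
    by auto
  have g1: "S2 c1 (sw (- a1 * q - b1 * p, b1 * q + d1 * p)) = (- d1 * p - b1 * q, e1 * p + d1 * q)"
    if "d1 = 2 * c1 * b1 - a1" "e1 = 2 * c1 * d1 - b1" for a1 b1 c1 d1 e1 :: real
    using that by (simp add: S2_def sw_def) (simp add: algebra_simps)
  have g2: "S2 c1 (sw (- b1 * q - a1 * p, d1 * q + b1 * p)) = (- b1 * p - d1 * q, d1 * p + e1 * q)"
    if "d1 = 2 * c1 * b1 - a1" "e1 = 2 * c1 * d1 - b1" for a1 b1 c1 d1 e1 :: real
    using that by (simp add: S2_def sw_def) (simp add: algebra_simps)
  have cm: "UU th (2 + real n) = UU th (real n + 2)" by (simp add: add.commute)
  show ?case
  proof (cases "even n")
    case True
    then show ?thesis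
      unfolding st Suc.IH rs using g1[OF r1 r2] by (simp add: cm)
  next
    case False
    then show ?thesis
      unfolding st Suc.IH rs using g2[OF r1 r2] by (simp add: cm)
  qed
qed

lemma dihedral2:
  assumes m: "m \<ge> (2::nat)"
  shows "alt2 (S2 (cos (pi / m))) (T2 (cos (pi / m))) m = alt2 (T2 (cos (pi / m))) (S2 (cos (pi / m))) m"
proof -
  let ?th = "pi / m"
  have pos: "0 < ?th" using m by simp
  have le: "?th < pi" using m by (simp add: divide_less_eq)
  have s: "sin ?th \<noteq> 0" using sin_gt_zero[OF pos le] by simp
  have u0: "UU ?th (real m) = 0" using m by (simp add: UU_def)
  have u1: "UU ?th (real m - 1) = 1"
  proof -
    have "(real m - 1) * ?th = pi - ?th" using m by (simp add: field_simps)
    then show ?thesis using s by (simp add: UU_def sin_pi_minus)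
  qed
  have u2: "UU ?th (real m + 1) = - 1"
  proof -
    have "(real m + 1) * ?th = pi + ?th" using m by (simp add: field_simps)
    then show ?thesis using s by (simp add: UU_def sin_periodic_pi2)
  qed
  have A: "alt2 (S2 (cos ?th)) (T2 (cos ?th)) m (p, q) = (if even m then (- p, - q) else (- q, - p))" for p q
    using alt2_closed[OF s, of m p q] u0 u1 u2 by simp
  show ?thesis
  proof (rule ext)
    fix z :: "real \<times> real"
    obtain p q where z: "z = (p, q)" by (cases z)
    have "alt2 (T2 (cos ?th)) (S2 (cos ?th)) m z = sw (alt2 (S2 (cos ?th)) (T2 (cos ?th)) m (sw z))"
      using alt2_sw_pt by blast
    then show "alt2 (S2 (cos ?th)) (T2 (cos ?th)) m z = alt2 (T2 (cos ?th)) (S2 (cos ?th)) m z"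
      using A z by (simp add: sw_def)
  qed
qed

locale cox =
  fixes S :: "'a set" and M :: "'a \<Rightarrow> 'a \<Rightarrow> nat"
  assumes finS: "finite S" and cm: "coxeter_matrix S M"
begin

definition bil :: "'a \<Rightarrow> 'a \<Rightarrow> real" where
  "bil s t = (if M s t = 0 then -1 else - cos (pi / real (M s t)))"

definition ev :: "'a \<Rightarrow> 'a \<Rightarrow> real" where "ev t = (\<lambda>u. if u = t then 1 else 0)"

definition beta :: "'a \<Rightarrow> ('a \<Rightarrow> real) \<Rightarrow> real" where
  "beta t x = (\<Sum>u\<in>S. bil t u * x u)"

definition rf :: "'a \<Rightarrow> ('a \<Rightarrow> real) \<Rightarrow> ('a \<Rightarrow> real)" where
  "rf t x = (\<lambda>u. x u - 2 * beta t x * ev t u)"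

definition sig :: "'a word \<Rightarrow> ('a \<Rightarrow> real) \<Rightarrow> ('a \<Rightarrow> real)" where
  "sig w = foldr (\<lambda>l f. rf (fst l) \<circ> f) w id"

lemma sig_Nil[simp]: "sig [] = id" by (simp add: sig_def)
lemma sig_Cons[simp]: "sig (l # w) = rf (fst l) \<circ> sig w" by (simp add: sig_def)
lemma sig_append: "sig (u @ v) = sig u \<circ> sig v"
  by (induction u) auto

lemma M_self: "s \<in> S \<Longrightarrow> M s s = 1" using cm by (simp add: coxeter_matrix_def)
lemma M_sym: "s \<in> S \<Longrightarrow> t \<in> S \<Longrightarrow> M s t = M t s" using cm by (simp add: coxeter_matrix_def)
lemma M_ge2: "s \<in> S \<Longrightarrow> t \<in> S \<Longrightarrow> s \<noteq> t \<Longrightarrow> M s t \<noteq> 0 \<Longrightarrow> M s t \<ge> 2"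
proof -
  assume a: "s \<in> S" "t \<in> S" "s \<noteq> t" "M s t \<noteq> 0"
  from cm a(1-3) have "M s t = 0 \<or> 2 \<le> M s t" unfolding coxeter_matrix_def by blast
  with a(4) show ?thesis by simp
qed

lemma bil_self: "s \<in> S \<Longrightarrow> bil s s = 1" by (simp add: bil_def M_self)
lemma bil_sym: "s \<in> S \<Longrightarrow> t \<in> S \<Longrightarrow> bil s t = bil t s" by (simp add: bil_def M_sym)

lemma beta_lin: "beta t (\<lambda>u. a * x u + b * y u) = a * beta t x + b * beta t y"
  by (simp add: beta_def sum.distrib sum_distrib_left algebra_simps)

lemma beta_ev: "s \<in> S \<Longrightarrow> beta t (ev s) = bil t s"
  using finS by (simp add: beta_def ev_def if_distrib[of "\<lambda>z. _ * z"] cong: if_cong)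

lemma beta_sub_ev: "s \<in> S \<Longrightarrow> beta r (\<lambda>u. y u - k * ev s u) = beta r y - k * bil r s"
proof -
  assume s: "s \<in> S"
  have "beta r (\<lambda>u. 1 * y u + (- k) * ev s u) = 1 * beta r y + (-k) * beta r (ev s)"
    by (rule beta_lin)
  then show ?thesis using beta_ev[OF s] by simp
qed

lemma beta_add_ev: "s \<in> S \<Longrightarrow> beta r (\<lambda>u. y u + k * ev s u) = beta r y + k * bil r s"
  using beta_sub_ev[of s r y "-k"] by simp

lemma beta_rf: "t \<in> S \<Longrightarrow> beta r (rf t y) = beta r y - 2 * beta t y * bil r t"
  unfolding rf_def using beta_sub_ev[of t r y "2 * beta t y"] by simp

lemma rf_rf: "t \<in> S \<Longrightarrow> rf t (rf t x) = x"
  using beta_rf[of t t x] bil_self[of t] by (simp add: rf_def[of t "rf t x"]) (simp add: rf_def algebra_simps)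

lemma rf_rf_comp: "t \<in> S \<Longrightarrow> rf t \<circ> rf t = id"
  using rf_rf by auto

lemma sig_braid:
  assumes s: "s \<in> S" and t: "t \<in> S" and st: "s \<noteq> t" and m0: "M s t \<noteq> 0"
  shows "sig (alt s t (M s t)) = sig (alt t s (M s t))"
proof -
  define m where "m = M s t"
  have m2: "m \<ge> 2" using M_ge2[OF s t st m0] by (simp add: m_def)
  define c where "c = cos (pi / real m)"
  have bst: "bil s t = - c" using m0 by (simp add: bil_def c_def m_def)
  have bts: "bil t s = - c" using bst bil_sym[OF s t] by simp
  have bss: "bil s s = 1" and btt: "bil t t = 1" using bil_self s t by auto
  define add2 where "add2 x a b = (\<lambda>u. x u + a * ev s u + b * ev t u)" for x :: "'a \<Rightarrow> real" and a b
  have rf_s_add2: "rf s (add2 x a b) = add2 x (a - 2 * beta s (add2 x a b)) b" for x a b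
    by (auto simp: rf_def add2_def fun_eq_iff algebra_simps)
  have rf_t_add2: "rf t (add2 x a b) = add2 x a (b - 2 * beta t (add2 x a b))" for x a b
    by (auto simp: rf_def add2_def fun_eq_iff algebra_simps)
  have L: "(\<exists>a b. sig (alt s t n) x = add2 x a b) \<and>
           (beta s (sig (alt s t n) x), beta t (sig (alt s t n) x)) = alt2 (S2 c) (T2 c) n (beta s x, beta t x) \<and>
           (\<exists>a b. sig (alt t s n) x = add2 x a b) \<and>
           (beta s (sig (alt t s n) x), beta t (sig (alt t s n) x)) = alt2 (T2 c) (S2 c) n (beta s x, beta t x)"
    for n x
  proof (induction n)
    case 0
    have "x = add2 x 0 0" by (simp add: add2_def)
    then show ?case by auto
  next
    case (Suc n)
    from Suc obtain a b where ab: "sig (alt t s n) x = add2 x a b" by blast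
    from Suc obtain a' b' where ab': "sig (alt s t n) x = add2 x a' b'" by blast
    have 1: "sig (alt s t (Suc n)) x = rf s (sig (alt t s n) x)" by simp
    have 2: "sig (alt t s (Suc n)) x = rf t (sig (alt s t n) x)" by simp
    have e1: "(beta s (rf s y), beta t (rf s y)) = S2 c (beta s y, beta t y)" for y
      using beta_rf[OF s, of s y] beta_rf[OF s, of t y] bss bts by (simp add: S2_def)
    have e2: "(beta s (rf t y), beta t (rf t y)) = T2 c (beta s y, beta t y)" for y
      using beta_rf[OF t, of s y] beta_rf[OF t, of t y] btt bst by (simp add: T2_def)
    show ?case
      unfolding 1 2
      using Suc e1[of "sig (alt t s n) x"] e2[of "sig (alt s t n) x"]
        rf_s_add2[of x a b] rf_t_add2[of x a' b'] ab ab'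
      by auto
  qed
  have c01: "0 \<le> c" "c < 1"
  proof -
    have p1: "0 < pi / real m" using m2 by simp
    have p2: "pi / real m \<le> pi / 2" using m2
      by (intro divide_left_mono) (auto simp: pi_ge_zero)
    note p = p1 p2
    show "0 \<le> c" unfolding c_def using p by (intro cos_ge_zero) auto
    show "c < 1" unfolding c_def using cos_monotone_0_pi[of 0 "pi / real m"] p by simp
  qed
  have beta_s_add2: "beta s (add2 x a b) = beta s x + a - c * b" for x a b
  proof -
    have "beta s (add2 x a b) = beta s (\<lambda>u. x u + a * ev s u) + b * bil s t"
      unfolding add2_def using beta_add_ev[OF t, of s "\<lambda>u. x u + a * ev s u" b] by simp
    then show ?thesis using beta_add_ev[OF s, of s x a] bss bst by simp
  qed
  have beta_t_add2: "beta t (add2 x a b) = beta t x - c * a + b" for x a b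
  proof -
    have "beta t (add2 x a b) = beta t (\<lambda>u. x u + a * ev s u) + b * bil t t"
      unfolding add2_def using beta_add_ev[OF t, of t "\<lambda>u. x u + a * ev s u" b] by simp
    then show ?thesis using beta_add_ev[OF s, of t x a] btt bts by simp
  qed
  show ?thesis
  proof (rule ext)
    fix x
    obtain a1 b1 where 1: "sig (alt s t m) x = add2 x a1 b1" using L by blast
    obtain a2 b2 where 2: "sig (alt t s m) x = add2 x a2 b2" using L by blast
    have "alt2 (S2 c) (T2 c) m = alt2 (T2 c) (S2 c) m" unfolding c_def by (rule dihedral2[OF m2])
    then have "(beta s (sig (alt s t m) x), beta t (sig (alt s t m) x))
             = (beta s (sig (alt t s m) x), beta t (sig (alt t s m) x))"
      using L[of m x] by simp
    then have eqs: "a1 - c * b1 = a2 - c * b2" "- c * a1 + b1 = - c * a2 + b2"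
      unfolding 1 2 beta_s_add2 beta_t_add2 by auto
    have d1: "a1 - a2 = c * (b1 - b2)" using eqs(1) by (simp add: algebra_simps)
    have d2: "b1 - b2 = c * (a1 - a2)" using eqs(2) by (simp add: algebra_simps)
    have "a1 - a2 = c * (c * (a1 - a2))" using d1 d2 by simp
    then have "(1 - c * c) * (a1 - a2) = 0" by (simp add: algebra_simps)
    moreover have "c * c < 1" using c01 mult_strict_mono[of c 1 c 1] by simp
    then have "1 - c * c \<noteq> 0" by simp
    ultimately have "a1 = a2" by simp
    with eqs have "b1 = b2" by simp
    show "sig (alt s t (M s t)) x = sig (alt t s (M s t)) x"
      using 1 2 \<open>a1 = a2\<close> \<open>b1 = b2\<close> by (simp add: m_def)
  qed
qed

end

context cox
begin

abbreviation Rc where "Rc \<equiv> braid_rels S M \<union> {([(s, True), (s, True)], []) | s. s \<in> S}"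

lemma sig_rel: "(l, r) \<in> Rc \<Longrightarrow> sig l = sig r"
proof -
  assume "(l, r) \<in> Rc"
  then consider (b) s t where "s \<in> S" "t \<in> S" "s \<noteq> t" "M s t \<noteq> 0" "l = alt s t (M s t)" "r = alt t s (M s t)"
    | (q) s where "s \<in> S" "l = [(s, True), (s, True)]" "r = []"
    unfolding braid_rels_def by blast
  then show ?thesis
  proof cases
    case b then show ?thesis using sig_braid by simp
  next
    case q then show ?thesis using rf_rf_comp by (simp add: comp_assoc)
  qed
qed

lemma sig_pres: "(u, v) \<in> pres_eq S Rc \<Longrightarrow> sig u = sig v"
proof (induction rule: pres_eq.induct)
  case (cancel u v x b)
  then show ?case by (simp add: sig_append rf_rf fun_eq_iff)
next
  case (rel l r u v)
  then show ?case using sig_rel[of l r] by (simp add: sig_append)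
qed auto

lemma fin_sig:
  assumes "finite (carrier (coxeter_group S M))"
  shows "finite (sig ` words S)"
proof -
  let ?f = "\<lambda>Y. sig (SOME w. w \<in> Y)"
  have "sig ` words S \<subseteq> ?f ` carrier (coxeter_group S M)"
  proof
    fix g assume "g \<in> sig ` words S"
    then obtain w where w: "w \<in> words S" "g = sig w" by blast
    define Xw where "Xw = pres_eq S Rc `` {w}"
    have Xwc: "Xw \<in> carrier (coxeter_group S M)" using w
      by (auto simp: coxeter_group_def presented_group_def Xw_def)
    have "w \<in> Xw" using w by (simp add: pres_eq.refl Xw_def)
    then have "(SOME w'. w' \<in> Xw) \<in> Xw" by (rule someI)
    then have "sig (SOME w'. w' \<in> Xw) = sig w" using sig_pres unfolding Xw_def by auto
    then show "g \<in> ?f ` carrier (coxeter_group S M)" using Xwc w by force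
  qed
  then show ?thesis using assms finite_surj by blast
qed

definition linf :: "(('a \<Rightarrow> real) \<Rightarrow> ('a \<Rightarrow> real)) \<Rightarrow> bool" where
  "linf g \<longleftrightarrow> (\<forall>x y a b. g (\<lambda>u. a * x u + b * y u) = (\<lambda>u. a * g x u + b * g y u))"

lemma linf_rf: "linf (rf t)"
  unfolding linf_def rf_def by (auto simp: beta_lin fun_eq_iff algebra_simps)

lemma linf_comp: "linf f \<Longrightarrow> linf g \<Longrightarrow> linf (f \<circ> g)"
  unfolding linf_def by simp

lemma linf_id: "linf id" unfolding linf_def by simp

lemma linf_sig: "linf (sig w)"
proof (induction w)
  case Nil show ?case unfolding sig_Nil by (rule linf_id)
next
  case (Cons l w) show ?case unfolding sig_Cons by (rule linf_comp[OF linf_rf Cons])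
qed

lemma linf_zero: "linf g \<Longrightarrow> g (\<lambda>u. 0) = (\<lambda>u. 0)"
  unfolding linf_def by (drule spec[of _ "\<lambda>u. 0"], drule spec[of _ "\<lambda>u. 0"],
    drule spec[of _ 0], drule spec[of _ 0]) simp

lemma linf_sum: assumes lg: "linf g" shows "finite A \<Longrightarrow> g (\<lambda>u. \<Sum>t\<in>A. c t * f t u) = (\<lambda>u. \<Sum>t\<in>A. c t * g (f t) u)"
proof (induction A rule: finite_induct)
  case empty then show ?case using linf_zero[OF lg] by simp
next
  case (insert t A)
  have "g (\<lambda>u. \<Sum>t\<in>insert t A. c t * f t u) = g (\<lambda>u. c t * f t u + 1 * (\<Sum>t\<in>A. c t * f t u))"
    using insert by simp
  also have "\<dots> = (\<lambda>u. c t * g (f t) u + 1 * g (\<lambda>u. \<Sum>t\<in>A. c t * f t u) u)"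
    using lg[unfolded linf_def, rule_format, where x="f t" and y="\<lambda>u. \<Sum>t\<in>A. c t * f t u" and a="c t" and b=1] by simp
  also have "\<dots> = (\<lambda>u. \<Sum>t\<in>insert t A. c t * g (f t) u)"
    using insert by simp
  finally show ?case .
qed

definition Fs where "Fs = sig ` words S"

definition ip :: "('a \<Rightarrow> real) \<Rightarrow> ('a \<Rightarrow> real) \<Rightarrow> real" where
  "ip x y = (\<Sum>g\<in>Fs. \<Sum>u\<in>S. g x u * g y u)"

lemma ip_sym: "ip x y = ip y x"
  by (simp add: ip_def mult.commute)

lemma ip_lin2: "ip x (\<lambda>u. a * y u + b * z u) = a * ip x y + b * ip x z"
proof -
  have "g (\<lambda>u. a * y u + b * z u) = (\<lambda>u. a * g y u + b * g z u)" if "g \<in> Fs" for g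
    using that linf_sig unfolding Fs_def linf_def by blast
  then show ?thesis
    by (simp add: ip_def algebra_simps sum.distrib sum_distrib_left)
qed

lemma ip_lin1: "ip (\<lambda>u. a * y u + b * z u) x = a * ip y x + b * ip z x"
  using ip_lin2 ip_sym by metis

lemma Fs_rf:
  assumes t: "t \<in> S"
  shows "bij_betw (\<lambda>g. g \<circ> rf t) Fs Fs"
proof -
  have img: "(\<lambda>g. g \<circ> rf t) ` Fs = Fs"
  proof
    show "(\<lambda>g. g \<circ> rf t) ` Fs \<subseteq> Fs"
    proof
      fix h assume "h \<in> (\<lambda>g. g \<circ> rf t) ` Fs"
      then obtain w where w: "w \<in> words S" "h = sig w \<circ> rf t" by (auto simp: Fs_def)
      then have "h = sig (w @ [(t, True)])" by (simp add: sig_append)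
      then show "h \<in> Fs" using w t by (auto simp: Fs_def)
    qed
  next
    show "Fs \<subseteq> (\<lambda>g. g \<circ> rf t) ` Fs"
    proof
      fix h assume "h \<in> Fs"
      then obtain w where w: "w \<in> words S" "h = sig w" by (auto simp: Fs_def)
      then have "h = sig (w @ [(t, True)]) \<circ> rf t" using t by (simp add: sig_append rf_rf fun_eq_iff)
      moreover have "sig (w @ [(t, True)]) \<in> Fs" using w t by (auto simp: Fs_def)
      ultimately show "h \<in> (\<lambda>g. g \<circ> rf t) ` Fs" by blast
    qed
  qed
  have "inj_on (\<lambda>g. g \<circ> rf t) Fs"
  proof (rule inj_onI)
    fix g h assume "g \<circ> rf t = h \<circ> rf t"
    then have "g \<circ> rf t \<circ> rf t = h \<circ> rf t \<circ> rf t" by simp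
    then show "g = h" using t by (simp add: fun_eq_iff rf_rf)
  qed
  with img show ?thesis by (simp add: bij_betw_def)
qed

lemma ip_rf: "t \<in> S \<Longrightarrow> ip (rf t x) (rf t y) = ip x y"
proof -
  assume t: "t \<in> S"
  let ?H = "\<lambda>g. \<Sum>u\<in>S. g x u * g y u"
  have "ip (rf t x) (rf t y) = (\<Sum>g\<in>Fs. ?H ((\<lambda>g. g \<circ> rf t) g))"
    by (simp add: ip_def)
  also have "\<dots> = (\<Sum>g\<in>Fs. ?H g)"
    by (rule sum.reindex_bij_betw[OF Fs_rf[OF t]])
  finally show ?thesis by (simp add: ip_def)
qed

lemma ip_ev:
  assumes t: "t \<in> S"
  shows "ip (ev t) x = beta t x * ip (ev t) (ev t)"
proof -
  define h where "h = (\<lambda>u. 1 * x u + (- beta t x) * ev t u)"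
  have "beta t h = 1 * beta t x + (- beta t x) * beta t (ev t)" unfolding h_def by (rule beta_lin)
  then have bh: "beta t h = 0" using beta_ev[OF t] bil_self[OF t] by simp
  have rh: "rf t h = h" using bh by (simp add: rf_def)
  have re: "rf t (ev t) = (\<lambda>u. (-1) * ev t u + 0 * ev t u)"
    using beta_ev[OF t, of t] bil_self[OF t] by (simp add: rf_def)
  have "ip (ev t) h = ip (rf t (ev t)) (rf t h)" using ip_rf[OF t] by simp
  also have "\<dots> = - ip (ev t) h" unfolding re rh ip_lin1 by simp
  finally have 0: "ip (ev t) h = 0" by simp
  have "x = (\<lambda>u. 1 * h u + beta t x * ev t u)" by (simp add: h_def)
  then have "ip (ev t) x = 1 * ip (ev t) h + beta t x * ip (ev t) (ev t)"
    by (metis ip_lin2)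
  with 0 show ?thesis by simp
qed

lemma ip_self_ge: "finite Fs \<Longrightarrow> (\<Sum>u\<in>S. x u * x u) \<le> ip x x"
proof -
  assume fin: "finite Fs"
  have idF: "id \<in> Fs" unfolding Fs_def using sig_Nil words_Nil by (metis image_eqI)
  have "(\<lambda>g. \<Sum>u\<in>S. g x u * g x u) id \<le> (\<Sum>g\<in>Fs. \<Sum>u\<in>S. g x u * g x u)"
    by (rule member_le_sum[OF idF]) (auto intro: sum_nonneg fin)
  then show ?thesis by (simp add: ip_def)
qed

lemma ip_decomp:
  assumes v0: "\<forall>u. u \<notin> S \<longrightarrow> v u = 0"
  shows "ip v v = (\<Sum>t\<in>S. v t * ip (ev t) v)"
proof -
  have vs: "v = (\<lambda>u. \<Sum>t\<in>S. v t * ev t u)"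
  proof
    fix u show "v u = (\<Sum>t\<in>S. v t * ev t u)"
      using v0 finS by (cases "u \<in> S") (auto simp: ev_def if_distrib[of "\<lambda>z. _ * z"] cong: if_cong)
  qed
  have gv: "g v = (\<lambda>u. \<Sum>t\<in>S. v t * g (ev t) u)" if "g \<in> Fs" for g
  proof -
    have "linf g" using that linf_sig by (auto simp: Fs_def)
    then have "g (\<lambda>u. \<Sum>t\<in>S. v t * ev t u) = (\<lambda>u. \<Sum>t\<in>S. v t * g (ev t) u)"
      using linf_sum finS by blast
    then show ?thesis using vs by metis
  qed
  have "ip v v = (\<Sum>g\<in>Fs. \<Sum>u\<in>S. (\<Sum>t\<in>S. v t * g (ev t) u) * g v u)"
    unfolding ip_def by (rule sum.cong[OF HOL.refl]) (metis gv)
  also have "\<dots> = (\<Sum>g\<in>Fs. \<Sum>u\<in>S. \<Sum>t\<in>S. v t * (g (ev t) u * g v u))"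
    by (simp add: sum_distrib_right mult.assoc)
  also have "\<dots> = (\<Sum>g\<in>Fs. \<Sum>t\<in>S. \<Sum>u\<in>S. v t * (g (ev t) u * g v u))"
    by (rule sum.cong[OF HOL.refl]) (rule sum.swap)
  also have "\<dots> = (\<Sum>t\<in>S. \<Sum>g\<in>Fs. \<Sum>u\<in>S. v t * (g (ev t) u * g v u))"
    by (rule sum.swap)
  also have "\<dots> = (\<Sum>t\<in>S. v t * ip (ev t) v)"
    by (simp add: ip_def sum_distrib_left)
  finally show ?thesis .
qed

theorem criterion:
  assumes finW: "finite (carrier (coxeter_group S M))"
    and v0: "\<forall>u. u \<notin> S \<longrightarrow> v u = 0"
    and vnn: "\<forall>u\<in>S. 0 \<le> v u"
    and vpos: "\<exists>u\<in>S. 0 < v u"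
    and neg: "\<forall>t\<in>S. 0 < v t \<longrightarrow> beta t v \<le> 0"
  shows False
proof -
  have finF: "finite Fs" using fin_sig[OF finW] by (simp add: Fs_def)
  have "ip v v = (\<Sum>t\<in>S. v t * (beta t v * ip (ev t) (ev t)))"
    unfolding ip_decomp[OF v0]
  proof (rule sum.cong[OF HOL.refl])
    fix t assume "t \<in> S"
    then show "v t * ip (ev t) v = v t * (beta t v * ip (ev t) (ev t))" using ip_ev[of t v] by simp
  qed
  also have "\<dots> \<le> 0"
  proof (rule sum_nonpos)
    fix t assume t: "t \<in> S"
    have ipn: "0 \<le> ip (ev t) (ev t)" unfolding ip_def by (intro sum_nonneg) simp
    show "v t * (beta t v * ip (ev t) (ev t)) \<le> 0"
    proof (cases "v t = 0")
      case True then show ?thesis by simp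
    next
      case False
      then have "0 < v t" using vnn t by force
      then have "beta t v \<le> 0" using neg t by blast
      then show ?thesis using \<open>0 < v t\<close> ipn
        by (simp add: mult_nonneg_nonpos mult_nonpos_nonneg)
    qed
  qed
  finally have le: "ip v v \<le> 0" .
  obtain u0 where u0: "u0 \<in> S" "0 < v u0" using vpos by blast
  have "v u0 * v u0 \<le> (\<Sum>u\<in>S. v u * v u)"
    by (rule member_le_sum[OF u0(1)]) (auto simp: finS)
  moreover have "0 < v u0 * v u0" using u0 by simp
  ultimately have "0 < ip v v" using ip_self_ge[OF finF, of v] by linarith
  with le show False by simp
qed

end

context cox
begin

definition Od :: "('a \<times> 'a) set" where
  "Od = {(x, y). x \<in> S \<and> y \<in> S \<and> x \<noteq> y \<and> odd (M x y)}"

lemma Od_sym: "(x, y) \<in> Od \<Longrightarrow> (y, x) \<in> Od"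
  unfolding Od_def using M_sym by auto

lemma Od_rtrancl_sym: "(x, y) \<in> Od\<^sup>* \<Longrightarrow> (y, x) \<in> Od\<^sup>*"
proof (induction rule: rtrancl_induct)
  case base then show ?case by simp
next
  case (step y z) then show ?case using Od_sym by (meson converse_rtrancl_into_rtrancl)
qed

lemma bil_nonpos: "s \<in> S \<Longrightarrow> t \<in> S \<Longrightarrow> s \<noteq> t \<Longrightarrow> bil s t \<le> 0"
proof -
  assume a: "s \<in> S" "t \<in> S" "s \<noteq> t"
  show ?thesis
  proof (cases "M s t = 0")
    case True then show ?thesis by (simp add: bil_def)
  next
    case False
    then have m: "M s t \<ge> 2" using M_ge2 a by blast
    have "0 < pi / real (M s t)" using m by simp
    moreover have "pi / real (M s t) \<le> pi / 2" using m
      by (intro divide_left_mono) (auto simp: pi_ge_zero)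
    ultimately have "0 \<le> cos (pi / real (M s t))" by (intro cos_ge_zero) auto
    then show ?thesis using False by (simp add: bil_def)
  qed
qed

lemma bil_odd: "s \<in> S \<Longrightarrow> t \<in> S \<Longrightarrow> s \<noteq> t \<Longrightarrow> odd (M s t) \<Longrightarrow> bil s t \<le> - 1 / 2"
proof -
  assume a: "s \<in> S" "t \<in> S" "s \<noteq> t" "odd (M s t)"
  have ne: "M s t \<noteq> 0" using a(4) by (intro notI) simp
  then have "M s t \<ge> 2" using M_ge2 a by blast
  with a(4) have m: "M s t \<ge> 3" by presburger
  have "0 \<le> pi / real (M s t)" by simp
  moreover have "pi / real (M s t) \<le> pi / 3" using m
    by (intro divide_left_mono) (auto simp: pi_ge_zero)
  ultimately have "cos (pi / 3) \<le> cos (pi / real (M s t))"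
    by (intro cos_monotone_0_pi_le) auto
  then show ?thesis using ne by (simp add: bil_def cos_60)
qed

definition r2 :: real where "r2 = sqrt 2 / 2"

lemma r2_sq: "r2 * r2 = 1 / 2" by (simp add: r2_def)
lemma r2_pos: "0 < r2" by (simp add: r2_def)
lemma r2_lt1: "r2 < 1"
proof -
  have "sqrt 2 < 2" by (rule real_less_lsqrt) auto
  then show ?thesis by (simp add: r2_def)
qed

lemma bil_even: "s \<in> S \<Longrightarrow> t \<in> S \<Longrightarrow> s \<noteq> t \<Longrightarrow> even (M s t) \<Longrightarrow> M s t \<noteq> 2 \<Longrightarrow> bil s t \<le> - r2"
proof -
  assume a: "s \<in> S" "t \<in> S" "s \<noteq> t" "even (M s t)" "M s t \<noteq> 2"
  show ?thesis
  proof (cases "M s t = 0")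
    case True then show ?thesis using r2_lt1 by (simp add: bil_def)
  next
    case False
    then have "M s t \<ge> 2" using M_ge2 a by blast
    with a(4,5) have m: "M s t \<ge> 4" by presburger
    have "0 \<le> pi / real (M s t)" by simp
    moreover have "pi / real (M s t) \<le> pi / 4" using m
      by (intro divide_left_mono) (auto simp: pi_ge_zero)
    ultimately have "cos (pi / 4) \<le> cos (pi / real (M s t))"
      by (intro cos_monotone_0_pi_le) auto
    then show ?thesis using False by (simp add: bil_def cos_45 r2_def)
  qed
qed

lemma bil_cross: "s \<in> S \<Longrightarrow> t \<in> S \<Longrightarrow> s \<noteq> t \<Longrightarrow> (s, t) \<notin> Od\<^sup>* \<Longrightarrow> M s t \<noteq> 2 \<Longrightarrow> bil s t \<le> - r2"
proof -
  assume a: "s \<in> S" "t \<in> S" "s \<noteq> t" "(s, t) \<notin> Od\<^sup>*" "M s t \<noteq> 2"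
  then have "even (M s t)" unfolding Od_def by auto
  with a show ?thesis using bil_even by blast
qed

lemma beta_split:
  assumes t: "t \<in> S" and K: "K \<subseteq> S" "t \<in> K" and vnn: "\<forall>u\<in>S. 0 \<le> v u"
  shows "beta t v \<le> (\<Sum>u\<in>K. bil t u * v u)"
proof -
  have fK: "finite K" using K finS finite_subset by blast
  have "beta t v = (\<Sum>u\<in>K. bil t u * v u) + (\<Sum>u\<in>S - K. bil t u * v u)"
    unfolding beta_def using K finS by (metis sum.subset_diff add.commute)
  moreover have "(\<Sum>u\<in>S - K. bil t u * v u) \<le> 0"
  proof (rule sum_nonpos)
    fix u assume u: "u \<in> S - K"
    then have "u \<noteq> t" using K by auto
    then have "bil t u \<le> 0" using bil_nonpos t u by auto
    then show "bil t u * v u \<le> 0" using vnn u by (simp add: mult_nonpos_nonneg)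
  qed
  ultimately show ?thesis by simp
qed

lemma beta_est2:
  assumes t: "t \<in> S" and x: "x \<in> S" and y: "y \<in> S" and d: "x \<noteq> t" "y \<noteq> t" "x \<noteq> y"
    and vnn: "\<forall>u\<in>S. 0 \<le> v u"
  shows "beta t v \<le> v t + bil t x * v x + bil t y * v y"
proof -
  have "beta t v \<le> (\<Sum>u\<in>{t, x, y}. bil t u * v u)"
    by (rule beta_split) (use t x y vnn in auto)
  also have "\<dots> = v t + bil t x * v x + bil t y * v y"
    using d bil_self[OF t] by (simp add: add.assoc)
  finally show ?thesis .
qed

lemma beta_est1:
  assumes t: "t \<in> S" and x: "x \<in> S" and d: "x \<noteq> t"
    and vnn: "\<forall>u\<in>S. 0 \<le> v u"
  shows "beta t v \<le> v t + bil t x * v x"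
proof -
  have "beta t v \<le> (\<Sum>u\<in>{t, x}. bil t u * v u)"
    by (rule beta_split) (use t x vnn in auto)
  also have "\<dots> = v t + bil t x * v x"
    using d bil_self[OF t] by simp
  finally show ?thesis .
qed

lemma triangle:
  assumes finW: "finite (carrier (coxeter_group S M))"
    and S: "u1 \<in> S" "u2 \<in> S" "w \<in> S" and d: "u1 \<noteq> u2" "u1 \<noteq> w" "u2 \<noteq> w"
    and o: "odd (M u1 u2)" and e1: "even (M u1 w)" "M u1 w \<noteq> 2" and e2: "even (M u2 w)" "M u2 w \<noteq> 2"
  shows False
proof -
  define v where "v = (\<lambda>x. if x = u1 \<or> x = u2 then 1 else if x = w then r2 else 0)"
  have b12: "bil u1 u2 \<le> - 1 / 2" "bil u2 u1 \<le> - 1 / 2"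
    using bil_odd[OF S(1,2) d(1) o] bil_sym[OF S(1,2)] by auto
  have b1w: "bil u1 w \<le> - r2" "bil w u1 \<le> - r2"
    using bil_even[OF S(1,3) d(2) e1] bil_sym[OF S(1,3)] by auto
  have b2w: "bil u2 w \<le> - r2" "bil w u2 \<le> - r2"
    using bil_even[OF S(2,3) d(3) e2] bil_sym[OF S(2,3)] by auto
  have vnn: "\<forall>u\<in>S. 0 \<le> v u" using r2_pos by (auto simp: v_def)
  have m: "bil x y * r2 \<le> - r2 * r2" if "bil x y \<le> - r2" for x y
    using mult_right_mono[OF that less_imp_le[OF r2_pos]] .
  show False
  proof (rule criterion[OF finW, of v])
    show "\<forall>u. u \<notin> S \<longrightarrow> v u = 0" using S by (auto simp: v_def)
    show "\<forall>u\<in>S. 0 \<le> v u" by (rule vnn)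
    show "\<exists>u\<in>S. 0 < v u" using S by (auto simp: v_def)
    show "\<forall>t\<in>S. 0 < v t \<longrightarrow> beta t v \<le> 0"
    proof (intro ballI impI)
      fix t assume t: "t \<in> S" "0 < v t"
      then have "t = u1 \<or> t = u2 \<or> t = w" by (auto simp: v_def split: if_splits)
      then show "beta t v \<le> 0"
      proof (elim disjE)
        assume "t = u1"
        then have "beta t v \<le> v u1 + bil u1 u2 * v u2 + bil u1 w * v w"
          using beta_est2[OF S(1,2,3) _ _ d(3) vnn] d by simp
        also have "\<dots> \<le> 0" using b12 m[OF b1w(1)] r2_sq d by (simp add: v_def)
        finally show ?thesis .
      next
        assume "t = u2"
        then have "beta t v \<le> v u2 + bil u2 u1 * v u1 + bil u2 w * v w"
          using beta_est2[OF S(2,1,3) _ _ _ vnn] d by simp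
        also have "\<dots> \<le> 0" using b12 m[OF b2w(1)] r2_sq d by (simp add: v_def)
        finally show ?thesis .
      next
        assume "t = w"
        then have "beta t v \<le> v w + bil w u1 * v u1 + bil w u2 * v u2"
          using beta_est2[OF S(3,1,2) _ _ d(1) vnn] d by simp
        also have "\<dots> \<le> 0" using b1w b2w r2_pos d by (simp add: v_def)
        finally show ?thesis .
      qed
    qed
  qed
qed

lemma chain:
  assumes finW: "finite (carrier (coxeter_group S M))"
    and a: "a \<in> S" and c: "c \<in> S" and ac: "a \<noteq> c"
    and p: "p \<noteq> []" "distinct p" "set p \<subseteq> S" "a \<notin> set p" "c \<notin> set p"
    and adj: "\<forall>i. Suc i < length p \<longrightarrow> odd (M (p ! i) (p ! Suc i))"
    and ea: "even (M a (hd p))" "M a (hd p) \<noteq> 2"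
    and ec: "even (M (last p) c)" "M (last p) c \<noteq> 2"
  shows False
proof -
  define n where "n = length p"
  have n0: "0 < n" using p by (simp add: n_def)
  define v where "v = (\<lambda>x. if x = a \<or> x = c then r2 else if x \<in> set p then 1 else 0)"
  have vnn: "\<forall>u\<in>S. 0 \<le> v u" using r2_pos by (auto simp: v_def)
  have m: "bil x y * r2 \<le> - r2 * r2" if "bil x y \<le> - r2" for x y
    using mult_right_mono[OF that less_imp_le[OF r2_pos]] .
  have hdS: "hd p \<in> S" using p by auto
  have lastS: "last p \<in> S" using p by auto
  have ahd: "a \<noteq> hd p" using p hd_in_set by metis
  have clast: "last p \<noteq> c" using p last_in_set by metis
  have ba: "bil a (hd p) \<le> - r2" "bil (hd p) a \<le> - r2"
    using bil_even[OF a hdS ahd ea] bil_sym[OF a hdS] by auto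
  have bc: "bil c (last p) \<le> - r2" "bil (last p) c \<le> - r2"
    using bil_even[OF lastS c clast ec] bil_sym[OF c lastS] by auto
  have va: "v a = r2" and vc: "v c = r2" by (simp_all add: v_def)
  have vhd: "v (hd p) = 1" using ahd p hd_in_set[OF p(1)] by (auto simp: v_def)
  have vlast: "v (last p) = 1" using clast p last_in_set[OF p(1)] by (auto simp: v_def)
  have pS: "p ! i \<in> S" if "i < n" for i using that p nth_mem n_def by blast
  have vp: "v (p ! i) = 1" if "i < n" for i
    using that p nth_mem n_def by (auto simp: v_def)
  have badj: "bil (p ! i) (p ! Suc i) \<le> - 1 / 2 \<and> bil (p ! Suc i) (p ! i) \<le> - 1 / 2" if "Suc i < n" for i
  proof -
    have ne: "p ! i \<noteq> p ! Suc i" using p(2) that n_def by (simp add: nth_eq_iff_index_eq)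
    have "odd (M (p ! i) (p ! Suc i))" using adj that n_def by blast
    then show ?thesis using bil_odd[OF pS pS ne] bil_sym[OF pS pS] that by auto
  qed
  show False
  proof (rule criterion[OF finW, of v])
    show "\<forall>u. u \<notin> S \<longrightarrow> v u = 0" using a c p by (auto simp: v_def)
    show "\<forall>u\<in>S. 0 \<le> v u" by (rule vnn)
    show "\<exists>u\<in>S. 0 < v u" using a r2_pos by (auto simp: v_def)
    show "\<forall>t\<in>S. 0 < v t \<longrightarrow> beta t v \<le> 0"
    proof (intro ballI impI)
      fix t assume t: "t \<in> S" "0 < v t"
      then have "t = a \<or> t = c \<or> t \<in> set p" by (auto simp: v_def split: if_splits)
      then show "beta t v \<le> 0"
      proof (elim disjE)
        assume ta: "t = a"
        have "hd p \<noteq> a" using p hd_in_set by metis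
        then have "beta t v \<le> v a + bil a (hd p) * v (hd p)"
          using beta_est1[OF a hdS _ vnn] ta by simp
        also have "\<dots> \<le> 0" using ba(1) unfolding va vhd by simp
        finally show ?thesis .
      next
        assume tc: "t = c"
        have "last p \<noteq> c" using p last_in_set by metis
        then have "beta t v \<le> v c + bil c (last p) * v (last p)"
          using beta_est1[OF c lastS _ vnn] tc by simp
        also have "\<dots> \<le> 0" using bc(1) unfolding vc vlast by simp
        finally show ?thesis .
      next
        assume "t \<in> set p"
        then obtain i where i: "i < n" "t = p ! i" by (auto simp: in_set_conv_nth n_def)
        define x where "x = (if i = 0 then a else p ! (i - 1))"
        define y where "y = (if i = n - 1 then c else p ! (i + 1))"
        have xS: "x \<in> S" using a pS i by (auto simp: x_def)
        have yS: "y \<in> S" using c pS i by (auto simp: y_def)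
        have xt: "x \<noteq> t"
        proof (cases "i = 0")
          case True then show ?thesis using p i nth_mem n_def by (auto simp: x_def)
        next
          case False then show ?thesis using p(2) i n_def by (auto simp: x_def nth_eq_iff_index_eq)
        qed
        have yt: "y \<noteq> t"
        proof (cases "i = n - 1")
          case True then show ?thesis using p i nth_mem n_def by (auto simp: y_def)
        next
          case False then show ?thesis using p(2) i n_def by (auto simp: y_def nth_eq_iff_index_eq)
        qed
        have xy: "x \<noteq> y"
        proof (cases "i = 0")
          case True
          then show ?thesis
          proof (cases "i = n - 1")
            case True then show ?thesis using \<open>i = 0\<close> ac by (simp add: x_def y_def)
          next
            case False then show ?thesis using \<open>i = 0\<close> p i nth_mem n_def
              by (auto simp: x_def y_def)
          qed
        next
          case False
          then show ?thesis
          proof (cases "i = n - 1")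
            case True then show ?thesis using \<open>i \<noteq> 0\<close> p i nth_mem n_def
              by (auto simp: x_def y_def)
          next
            case False then show ?thesis using \<open>i \<noteq> 0\<close> p(2) i n_def
              by (auto simp: x_def y_def nth_eq_iff_index_eq)
          qed
        qed
        have bx: "bil t x * v x \<le> - 1 / 2"
        proof (cases "i = 0")
          case True
          then have "t = hd p" using i p by (simp add: hd_conv_nth)
          then show ?thesis using True m[OF ba(2)] r2_sq ac by (simp add: x_def v_def)
        next
          case False
          then have "Suc (i - 1) < n" "Suc (i - 1) = i" using i by auto
          then show ?thesis using False badj[of "i - 1"] vp[of "i - 1"] i by (simp add: x_def)
        qed
        have by': "bil t y * v y \<le> - 1 / 2"
        proof (cases "i = n - 1")
          case True
          then have "t = last p" using i p by (simp add: last_conv_nth n_def)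
          then show ?thesis using True m[OF bc(2)] r2_sq ac by (simp add: y_def v_def)
        next
          case False
          then have "Suc i < n" using i by auto
          then show ?thesis using False badj[of i] vp[of "i + 1"] i by (simp add: y_def)
        qed
        have "beta t v \<le> v t + bil t x * v x + bil t y * v y"
          by (rule beta_est2[OF t(1) xS yS xt yt xy vnn])
        also have "\<dots> \<le> 0" using bx by' vp i by simp
        finally show ?thesis .
      qed
    qed
  qed
qed

lemma od_path:
  assumes "(x, y) \<in> Od\<^sup>*" and x: "x \<in> S"
  shows "\<exists>p. p \<noteq> [] \<and> hd p = x \<and> last p = y \<and> distinct p \<and> set p \<subseteq> S \<and>
            (\<forall>z\<in>set p. (x, z) \<in> Od\<^sup>*) \<and> (\<forall>i. Suc i < length p \<longrightarrow> (p ! i, p ! Suc i) \<in> Od)"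
  using assms(1)
proof (induction rule: rtrancl_induct)
  case base
  show ?case by (rule exI[of _ "[x]"]) (use x in auto)
next
  case (step y z)
  then obtain p where p: "p \<noteq> []" "hd p = x" "last p = y" "distinct p" "set p \<subseteq> S"
    "\<forall>w\<in>set p. (x, w) \<in> Od\<^sup>*" "\<forall>i. Suc i < length p \<longrightarrow> (p ! i, p ! Suc i) \<in> Od" by blast
  have zS: "z \<in> S" using step(2) by (auto simp: Od_def)
  show ?case
  proof (cases "z \<in> set p")
    case True
    then obtain k where k: "k < length p" "p ! k = z" by (auto simp: in_set_conv_nth)
    define q where "q = take (Suc k) p"
    have "q \<noteq> []" using p k by (simp add: q_def)
    moreover have "hd q = x" using p k by (simp add: q_def hd_take)
    moreover have "last q = z" using k by (simp add: q_def take_Suc_conv_app_nth)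
    moreover have "distinct q" using p by (simp add: q_def)
    moreover have "set q \<subseteq> S" using p(5) unfolding q_def by (auto dest: in_set_takeD)
    moreover have "\<forall>w\<in>set q. (x, w) \<in> Od\<^sup>*" using p(6) unfolding q_def by (auto dest: in_set_takeD)
    moreover have "\<forall>i. Suc i < length q \<longrightarrow> (q ! i, q ! Suc i) \<in> Od"
      using p(7) by (auto simp: q_def)
    ultimately show ?thesis by blast
  next
    case False
    define q where "q = p @ [z]"
    have "q \<noteq> []" by (simp add: q_def)
    moreover have "hd q = x" using p by (simp add: q_def)
    moreover have "last q = z" by (simp add: q_def)
    moreover have "distinct q" using p False by (simp add: q_def)
    moreover have "set q \<subseteq> S" using p zS by (simp add: q_def)
    moreover have "\<forall>w\<in>set q. (x, w) \<in> Od\<^sup>*" using p step by (auto simp: q_def)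
    moreover have "\<forall>i. Suc i < length q \<longrightarrow> (q ! i, q ! Suc i) \<in> Od"
    proof (intro allI impI)
      fix i assume i: "Suc i < length q"
      show "(q ! i, q ! Suc i) \<in> Od"
      proof (cases "Suc i < length p")
        case True then show ?thesis using p(7) by (simp add: q_def nth_append)
      next
        case False
        then have "Suc i = length p" using i by (simp add: q_def)
        then have ii: "i = length p - 1" by simp
        then have "q ! i = last p" "q ! Suc i = z" using p(1) \<open>Suc i = length p\<close>
          by (auto simp: q_def nth_append last_conv_nth)
        then show ?thesis using p(3) step(2) by simp
      qed
    qed
    ultimately show ?thesis by blast
  qed
qed

lemma branch:
  assumes finW: "finite (carrier (coxeter_group S M))"
    and S: "a \<in> S" "b \<in> S" "b' \<in> S" "c \<in> S"
    and ab: "(a, b) \<notin> Od\<^sup>*" and bb: "(b, b') \<in> Od\<^sup>*" and bc: "(b', c) \<notin> Od\<^sup>*"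
    and ac: "(a, c) \<notin> Od\<^sup>*"
    and n1: "M a b \<noteq> 2" and n2: "M b' c \<noteq> 2"
  shows False
proof -
  obtain p where p: "p \<noteq> []" "hd p = b" "last p = b'" "distinct p" "set p \<subseteq> S"
    "\<forall>w\<in>set p. (b, w) \<in> Od\<^sup>*" "\<forall>i. Suc i < length p \<longrightarrow> (p ! i, p ! Suc i) \<in> Od"
    using od_path[OF bb S(2)] by blast
  have anp: "a \<notin> set p"
  proof
    assume "a \<in> set p"
    then have "(b, a) \<in> Od\<^sup>*" using p by blast
    then show False using ab Od_rtrancl_sym by blast
  qed
  have cnp: "c \<notin> set p"
  proof
    assume "c \<in> set p"
    then have "(b, c) \<in> Od\<^sup>*" using p by blast
    moreover have "(b', b) \<in> Od\<^sup>*" using bb Od_rtrancl_sym by blast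
    ultimately show False using bc by (meson rtrancl_trans)
  qed
  have "a \<noteq> c" using ac by auto
  moreover have "a \<noteq> b" using ab by auto
  moreover have "b' \<noteq> c" using bc by auto
  moreover have adj: "\<forall>i. Suc i < length p \<longrightarrow> odd (M (p ! i) (p ! Suc i))"
    using p(7) by (auto simp: Od_def)
  moreover have "even (M a b)" using ab S \<open>a \<noteq> b\<close> by (auto simp: Od_def)
  moreover have "even (M b' c)" using bc S \<open>b' \<noteq> c\<close> by (auto simp: Od_def)
  ultimately have "even (M a (hd p))" "M a (hd p) \<noteq> 2" "even (M (last p) c)" "M (last p) c \<noteq> 2"
    using p(2,3) n1 n2 by simp_all
  then show False
    using chain[OF finW S(1) S(4) \<open>a \<noteq> c\<close> p(1,4,5) anp cnp adj] by blast
qed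

end

lemma rtrancl_leave:
  assumes "(x, y) \<in> R\<^sup>*" "x \<in> A" "y \<notin> A"
  shows "\<exists>a b. a \<in> A \<and> b \<notin> A \<and> (a, b) \<in> R"
  using assms
proof (induction rule: rtrancl_induct)
  case base then show ?case by simp
next
  case (step y z)
  show ?case
  proof (cases "y \<in> A")
    case True then show ?thesis using step by blast
  next
    case False then show ?thesis using step by blast
  qed
qed

context cox
begin

definition Irr :: "('a \<times> 'a) set" where
  "Irr = {(x, y). x \<in> S \<and> y \<in> S \<and> x \<noteq> y \<and> M x y \<noteq> 2}"

lemma Od_trans: "(x, y) \<in> Od\<^sup>* \<Longrightarrow> (y, z) \<in> Od\<^sup>* \<Longrightarrow> (x, z) \<in> Od\<^sup>*"
  by (rule rtrancl_trans)

lemma isolated_class: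
  assumes "\<forall>u. (s, u) \<notin> Od" "(s, x) \<in> Od\<^sup>*"
  shows "x = s"
  using assms(2,1) by (induction rule: converse_rtrancl_induct) auto

lemma commuting_pair:
  assumes finW: "finite (carrier (coxeter_group S M))"
    and irr: "coxeter_irreducible S M"
    and h5: "\<not> (card S = 2 \<and> (\<forall>s\<in>S. \<forall>t\<in>S. s \<noteq> t \<longrightarrow> even (M s t)))"
    and s: "s \<in> S" and t: "t \<in> S" and st: "(s, t) \<notin> Od\<^sup>*"
  shows "\<exists>u v. u \<in> S \<and> v \<in> S \<and> (s, u) \<in> Od\<^sup>* \<and> (t, v) \<in> Od\<^sup>* \<and> M u v = 2"
proof (rule ccontr)
  assume "\<not> ?thesis"
  then have nc: "\<And>u v. u \<in> S \<Longrightarrow> v \<in> S \<Longrightarrow> (s, u) \<in> Od\<^sup>* \<Longrightarrow> (t, v) \<in> Od\<^sup>* \<Longrightarrow> M u v \<noteq> 2"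
    by blast
  have sne: "s \<noteq> t" using st by auto
  have ts: "(t, s) \<notin> Od\<^sup>*" using st Od_rtrancl_sym by blast
  have cross: "even (M x y)" if "x \<in> S" "y \<in> S" "(x, y) \<notin> Od\<^sup>*" for x y
    using that by (auto simp: Od_def)
  have ns: "\<forall>u. (s, u) \<notin> Od"
  proof (intro allI notI)
    fix u assume su: "(s, u) \<in> Od"
    then have uS: "u \<in> S" and su': "s \<noteq> u" and o: "odd (M s u)" by (auto simp: Od_def)
    have su2: "(s, u) \<in> Od\<^sup>*" using su by blast
    have ut: "(u, t) \<notin> Od\<^sup>*" using su2 st Od_trans by blast
    show False
    proof (rule triangle[OF finW s uS t su' _ _ o])
      show "s \<noteq> t" by (rule sne)
      show "u \<noteq> t" using ut by auto
      show "even (M s t)" using cross s t st by blast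
      show "M s t \<noteq> 2" using nc[OF s t] by simp
      show "even (M u t)" using cross uS t ut by blast
      show "M u t \<noteq> 2" using nc[OF uS t su2] by simp
    qed
  qed
  have nt: "\<forall>u. (t, u) \<notin> Od"
  proof (intro allI notI)
    fix u assume tu: "(t, u) \<in> Od"
    then have uS: "u \<in> S" and tu': "t \<noteq> u" and o: "odd (M t u)" by (auto simp: Od_def)
    have tu2: "(t, u) \<in> Od\<^sup>*" using tu by blast
    have us: "(u, s) \<notin> Od\<^sup>*" using tu2 ts Od_trans by blast
    show False
    proof (rule triangle[OF finW t uS s tu' _ _ o])
      show "t \<noteq> s" using sne by simp
      show "u \<noteq> s" using us by auto
      show "even (M t s)" using cross t s ts by blast
      show "M t s \<noteq> 2" using nc[OF s t] M_sym[OF s t] by simp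
      show "even (M u s)" using cross uS s us by blast
      show "M u s \<noteq> 2" using nc[OF s uS _ tu2] M_sym[OF s uS] by simp
    qed
  qed
  have cs: "x = s" if "(x, s) \<in> Od\<^sup>*" for x
    using isolated_class[OF ns] that Od_rtrancl_sym by blast
  have ct: "x = t" if "(x, t) \<in> Od\<^sup>*" for x
    using isolated_class[OF nt] that Od_rtrancl_sym by blast
  have stn: "M s t \<noteq> 2" using nc[OF s t] by simp
  show False
  proof (cases "S = {s, t}")
    case True
    have "card S = 2" using True sne by simp
    moreover have "\<forall>x\<in>S. \<forall>y\<in>S. x \<noteq> y \<longrightarrow> even (M x y)"
    proof (intro ballI impI)
      fix x y assume "x \<in> S" "y \<in> S" "x \<noteq> y"
      then have "(x = s \<and> y = t) \<or> (x = t \<and> y = s)" using True by auto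
      then show "even (M x y)" using cross[OF s t st] M_sym[OF s t] by auto
    qed
    ultimately show False using h5 by blast
  next
    case False
    then obtain c where c: "c \<in> S" "c \<notin> {s, t}" using s t by blast
    have "(s, c) \<in> Irr\<^sup>*" using irr s c unfolding coxeter_irreducible_def Irr_def by blast
    then obtain x y where xy: "x \<in> {s, t}" "y \<notin> {s, t}" "(x, y) \<in> Irr"
      using rtrancl_leave[of s c Irr "{s, t}"] c by auto
    then have yS: "y \<in> S" and xyn: "M x y \<noteq> 2" by (auto simp: Irr_def)
    have ys: "(y, s) \<notin> Od\<^sup>*" using cs xy by blast
    have yt: "(y, t) \<notin> Od\<^sup>*" using ct xy by blast
    from xy(1) show False
    proof
      assume "x = s"
      show False
      proof (rule branch[OF finW yS s s t ys _ st yt])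
        show "M y s \<noteq> 2" using xyn \<open>x = s\<close> M_sym[OF s yS] by simp
        show "M s t \<noteq> 2" by (rule stn)
      qed simp
    next
      assume "x \<in> {t}"
      then have "x = t" by simp
      show False
      proof (rule branch[OF finW yS t t s yt _ ts ys])
        show "M y t \<noteq> 2" using xyn \<open>x = t\<close> M_sym[OF t yS] by simp
        show "M t s \<noteq> 2" using stn M_sym[OF s t] by simp
      qed simp
    qed
  qed
qed

lemma two_classes:
  assumes finW: "finite (carrier (coxeter_group S M))"
    and irr: "coxeter_irreducible S M"
  shows "\<exists>a\<in>S. (\<forall>x\<in>S. (a, x) \<in> Od\<^sup>*) \<or>
           (\<exists>b\<in>S. (a, b) \<notin> Od\<^sup>* \<and> (\<forall>x\<in>S. (a, x) \<in> Od\<^sup>* \<or> (b, x) \<in> Od\<^sup>*))"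
proof -
  obtain s0 where s0: "s0 \<in> S" using irr unfolding coxeter_irreducible_def by blast
  show ?thesis
  proof (cases "\<forall>x\<in>S. (s0, x) \<in> Od\<^sup>*")
    case True then show ?thesis using s0 by blast
  next
    case False
    then obtain s1 where s1: "s1 \<in> S" "(s0, s1) \<notin> Od\<^sup>*" by blast
    define Z where "Z = {x. (s0, x) \<in> Od\<^sup>* \<or> (\<exists>y z. y \<in> S \<and> z \<in> S \<and> (s0, y) \<in> Od\<^sup>* \<and> (z, x) \<in> Od\<^sup>*
                     \<and> (s0, z) \<notin> Od\<^sup>* \<and> y \<noteq> z \<and> M y z \<noteq> 2)}"
    have closed: "x' \<in> Z" if x: "x \<in> Z" and e: "(x, x') \<in> Irr" for x x'
    proof -
      from e have xS: "x \<in> S" and x'S: "x' \<in> S" and ne: "x \<noteq> x'" and n2: "M x x' \<noteq> 2"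
        by (auto simp: Irr_def)
      show ?thesis
      proof (cases "(s0, x') \<in> Od\<^sup>*")
        case True then show ?thesis by (simp add: Z_def)
      next
        case nx': False
        show ?thesis
        proof (cases "(s0, x) \<in> Od\<^sup>*")
          case True
          then show ?thesis unfolding Z_def using xS x'S ne n2 nx' by blast
        next
          case nx: False
          then obtain y z where yz: "y \<in> S" "z \<in> S" "(s0, y) \<in> Od\<^sup>*" "(z, x) \<in> Od\<^sup>*"
            "(s0, z) \<notin> Od\<^sup>*" "y \<noteq> z" "M y z \<noteq> 2" using x unfolding Z_def by blast
          show ?thesis
          proof (cases "(x, x') \<in> Od\<^sup>*")
            case True
            then have "(z, x') \<in> Od\<^sup>*" using yz(4) Od_trans by blast
            then show ?thesis unfolding Z_def using yz by blast
          next
            case False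
            have yz': "(y, z) \<notin> Od\<^sup>*" using yz(3,5) Od_trans by blast
            have yx': "(y, x') \<notin> Od\<^sup>*" using yz(3) nx' Od_trans by blast
            have False by (rule branch[OF finW yz(1,2) xS x'S yz' yz(4) False yx' yz(7) n2])
            then show ?thesis ..
          qed
        qed
      qed
    qed
    have allZ: "x \<in> Z" if "x \<in> S" for x
    proof -
      have "(s0, x) \<in> Irr\<^sup>*" using irr s0 that unfolding coxeter_irreducible_def Irr_def by blast
      then show ?thesis
      proof (induction rule: rtrancl_induct)
        case base then show ?case by (simp add: Z_def)
      next
        case (step y z) then show ?case using closed by blast
      qed
    qed
    have "\<forall>x\<in>S. (s0, x) \<in> Od\<^sup>* \<or> (s1, x) \<in> Od\<^sup>*"
    proof
      fix x assume xS: "x \<in> S"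
      show "(s0, x) \<in> Od\<^sup>* \<or> (s1, x) \<in> Od\<^sup>*"
      proof (cases "(s0, x) \<in> Od\<^sup>*")
        case True then show ?thesis ..
      next
        case nx: False
        obtain y z where yz: "y \<in> S" "z \<in> S" "(s0, y) \<in> Od\<^sup>*" "(z, s1) \<in> Od\<^sup>*"
          "(s0, z) \<notin> Od\<^sup>*" "y \<noteq> z" "M y z \<noteq> 2"
          using allZ[OF s1(1)] s1(2) unfolding Z_def by blast
        obtain y' z' where yz': "y' \<in> S" "z' \<in> S" "(s0, y') \<in> Od\<^sup>*" "(z', x) \<in> Od\<^sup>*"
          "(s0, z') \<notin> Od\<^sup>*" "y' \<noteq> z'" "M y' z' \<noteq> 2"
          using allZ[OF xS] nx unfolding Z_def by blast
        have "(z, z') \<in> Od\<^sup>*"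
        proof (rule ccontr)
          assume zz: "(z, z') \<notin> Od\<^sup>*"
          have zy: "(z, y) \<notin> Od\<^sup>*" using yz(3,5) Od_trans Od_rtrancl_sym by blast
          have yy: "(y, y') \<in> Od\<^sup>*" using yz(3) yz'(3) Od_trans Od_rtrancl_sym by blast
          have yz2: "(y', z') \<notin> Od\<^sup>*" using yz'(3,5) Od_trans by blast
          have "M z y \<noteq> 2" using yz(7) M_sym[OF yz(1,2)] by simp
          show False by (rule branch[OF finW yz(2) yz(1) yz'(1) yz'(2) zy yy yz2 zz \<open>M z y \<noteq> 2\<close> yz'(7)])
        qed
        then have "(s1, x) \<in> Od\<^sup>*" using yz(4) yz'(4) Od_trans Od_rtrancl_sym by blast
        then show ?thesis ..
      qed
    qed
    then show ?thesis using s0 s1 by blast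
  qed
qed

end

definition evw :: "('g, 'b) monoid_scheme \<Rightarrow> ('a \<Rightarrow> 'g) \<Rightarrow> 'a word \<Rightarrow> 'g" where
  "evw H g w = foldr (\<lambda>(x, b) acc. (if b then g x else inv\<^bsub>H\<^esub> (g x)) \<otimes>\<^bsub>H\<^esub> acc) w \<one>\<^bsub>H\<^esub>"

lemma evw_Nil[simp]: "evw H g [] = \<one>\<^bsub>H\<^esub>" by (simp add: evw_def)
lemma evw_Cons[simp]: "evw H g ((x, b) # w) = (if b then g x else inv\<^bsub>H\<^esub> (g x)) \<otimes>\<^bsub>H\<^esub> evw H g w"
  by (simp add: evw_def)

context group
begin

lemma evw_closed: "g ` S \<subseteq> carrier G \<Longrightarrow> w \<in> words S \<Longrightarrow> evw G g w \<in> carrier G"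
  by (induction w) auto

lemma evw_hom:
  assumes h: "h \<in> hom G H" and H: "group H" and g: "g ` S \<subseteq> carrier G"
  shows "w \<in> words S \<Longrightarrow> h (evw G g w) = evw H (h \<circ> g) w"
proof (induction w)
  case Nil
  have gh: "group_hom G H h" using h H by (simp add: group_hom_def group_hom_axioms_def is_group)
  then show ?case by (simp add: group_hom.hom_one)
next
  case (Cons a w)
  obtain x b where a: "a = (x, b)" by (cases a)
  have x: "g x \<in> carrier G" using Cons.prems g a by auto
  have w: "evw G g w \<in> carrier G" using Cons.prems evw_closed[OF g] by simp
  have gh: "group_hom G H h" using h H by (simp add: group_hom_def group_hom_axioms_def is_group)
  show ?case using Cons x w a group_hom.hom_inv[OF gh] h by (auto simp: hom_mult)
qed

lemma inv_cancel_l: "a \<in> carrier G \<Longrightarrow> b \<in> carrier G \<Longrightarrow> inv a \<otimes> (a \<otimes> b) = b"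
  by (simp add: m_assoc[symmetric])
lemma inv_cancel_l2: "a \<in> carrier G \<Longrightarrow> b \<in> carrier G \<Longrightarrow> a \<otimes> (inv a \<otimes> b) = b"
  by (simp add: m_assoc[symmetric])

lemma comm_comm_one: "a \<in> carrier G \<Longrightarrow> b \<in> carrier G \<Longrightarrow> a \<otimes> b = b \<otimes> a \<Longrightarrow> a \<otimes> b \<otimes> inv a \<otimes> inv b = \<one>"
  by (simp add: m_assoc inv_cancel_l2)

lemma comm_decomp: "x \<in> carrier G \<Longrightarrow> y \<in> carrier G \<Longrightarrow> x \<otimes> y = (x \<otimes> y \<otimes> inv x \<otimes> inv y) \<otimes> (y \<otimes> x)"
  by (simp add: m_assoc inv_cancel_l)

lemma comm_inv_right: "a \<in> carrier G \<Longrightarrow> b \<in> carrier G \<Longrightarrow> a \<otimes> b = b \<otimes> a \<Longrightarrow> a \<otimes> inv b = inv b \<otimes> a"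
  by (metis inv_closed inv_solve_left' inv_solve_right m_assoc m_closed)

lemma evw_commute_gen:
  assumes g: "g ` S \<subseteq> carrier G" and c: "\<forall>s\<in>S. \<forall>t\<in>S. g s \<otimes> g t = g t \<otimes> g s"
    and s: "s \<in> S"
  shows "v \<in> words S \<Longrightarrow> g s \<otimes> evw G g v = evw G g v \<otimes> g s"
proof (induction v)
  case Nil then show ?case using g s by auto
next
  case (Cons a v)
  obtain x b where a: "a = (x, b)" by (cases a)
  have x: "x \<in> S" using Cons.prems a by auto
  have gx: "g x \<in> carrier G" "g s \<in> carrier G" using g x s by auto
  have w: "evw G g v \<in> carrier G" using Cons.prems evw_closed[OF g] by simp
  define l where "l = (if b then g x else inv (g x))"
  have l: "l \<in> carrier G" using gx by (simp add: l_def)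
  have sl: "g s \<otimes> l = l \<otimes> g s"
    using c x s gx comm_inv_right[of "g s" "g x"] by (auto simp: l_def)
  have "g s \<otimes> evw G g (a # v) = g s \<otimes> (l \<otimes> evw G g v)" by (simp add: a l_def)
  also have "\<dots> = l \<otimes> (g s \<otimes> evw G g v)" using sl l w gx by (metis m_assoc)
  also have "\<dots> = l \<otimes> (evw G g v \<otimes> g s)" using Cons by simp
  also have "\<dots> = evw G g (a # v) \<otimes> g s" using l w gx by (simp add: a l_def m_assoc)
  finally show ?case .
qed

lemma evw_commute:
  assumes g: "g ` S \<subseteq> carrier G" and c: "\<forall>s\<in>S. \<forall>t\<in>S. g s \<otimes> g t = g t \<otimes> g s"
    and v: "v \<in> words S"
  shows "u \<in> words S \<Longrightarrow> evw G g u \<otimes> evw G g v = evw G g v \<otimes> evw G g u"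
proof (induction u)
  case Nil then show ?case using evw_closed[OF g v] by simp
next
  case (Cons a u)
  obtain x b where a: "a = (x, b)" by (cases a)
  have x: "x \<in> S" using Cons.prems a by auto
  have gx: "g x \<in> carrier G" using g x by auto
  have w: "evw G g v \<in> carrier G" using v evw_closed[OF g] by simp
  have wu: "evw G g u \<in> carrier G" using Cons.prems evw_closed[OF g] by simp
  define l where "l = (if b then g x else inv (g x))"
  have l: "l \<in> carrier G" using gx by (simp add: l_def)
  have sl: "l \<otimes> evw G g v = evw G g v \<otimes> l"
    using evw_commute_gen[OF g c x v] comm_inv_right[of "evw G g v" "g x"] gx w
    by (auto simp: l_def)
  have "evw G g (a # u) \<otimes> evw G g v = l \<otimes> (evw G g u \<otimes> evw G g v)"
    using l w wu by (simp add: a l_def m_assoc)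
  also have "\<dots> = l \<otimes> (evw G g v \<otimes> evw G g u)" using Cons by simp
  also have "\<dots> = evw G g v \<otimes> (l \<otimes> evw G g u)" using sl l w wu by (metis m_assoc)
  also have "\<dots> = evw G g v \<otimes> evw G g (a # u)" by (simp add: a l_def)
  finally show ?case .
qed

lemma rcos_eq_N: "N \<lhd> G \<Longrightarrow> x \<in> carrier G \<Longrightarrow> (N #> x = N) \<longleftrightarrow> x \<in> N"
  using coset_join1 coset_join2 normal_imp_subgroup by metis

lemma comm_Mod:
  assumes N: "N \<lhd> G" and c: "\<And>x y. x \<in> carrier G \<Longrightarrow> y \<in> carrier G \<Longrightarrow> x \<otimes> y \<otimes> inv x \<otimes> inv y \<in> N"
  shows "comm_group (G Mod N)"
proof -
  interpret N: normal N G by (rule N)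
  have grp: "group (G Mod N)" by (rule N.factorgroup_is_group)
  show ?thesis
  proof (rule group.group_comm_groupI[OF grp])
    fix XX YY assume "XX \<in> carrier (G Mod N)" "YY \<in> carrier (G Mod N)"
    then obtain x y where xy: "x \<in> carrier G" "y \<in> carrier G" "XX = N #> x" "YY = N #> y"
      by (auto simp: carrier_FactGroup)
    have "XX \<otimes>\<^bsub>G Mod N\<^esub> YY = N #> (x \<otimes> y)" using xy N.rcos_sum by simp
    moreover have "YY \<otimes>\<^bsub>G Mod N\<^esub> XX = N #> (y \<otimes> x)" using xy N.rcos_sum by simp
    moreover have "N #> (x \<otimes> y) = N #> (y \<otimes> x)"
    proof -
      define c0 where "c0 = x \<otimes> y \<otimes> inv x \<otimes> inv y"
      have c0N: "c0 \<in> N" using c xy by (simp add: c0_def)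
      have c0: "c0 \<in> carrier G" using c0N N.subset by blast
      have "x \<otimes> y = c0 \<otimes> (y \<otimes> x)" using xy comm_decomp by (simp add: c0_def)
      then have "N #> (x \<otimes> y) = (N #> c0) #> (y \<otimes> x)"
        using coset_mult_assoc[OF N.subset c0] xy by simp
      also have "\<dots> = N #> (y \<otimes> x)" using coset_join2[OF c0 N.subgroup_axioms c0N] by simp
      finally show ?thesis .
    qed
    ultimately show "XX \<otimes>\<^bsub>G Mod N\<^esub> YY = YY \<otimes>\<^bsub>G Mod N\<^esub> XX" by simp
  qed
qed

lemma comm_in_N:
  assumes N: "N \<lhd> G" and x: "x \<in> carrier G" and y: "y \<in> carrier G"
    and c: "(N #> x) \<otimes>\<^bsub>G Mod N\<^esub> (N #> y) = (N #> y) \<otimes>\<^bsub>G Mod N\<^esub> (N #> x)"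
  shows "x \<otimes> y \<otimes> inv x \<otimes> inv y \<in> N"
proof -
  interpret N: normal N G by (rule N)
  have grp: "group (G Mod N)" by (rule N.factorgroup_is_group)
  have h: "(\<lambda>a. N #> a) \<in> hom G (G Mod N)" by (rule N.r_coset_hom_Mod)
  have gh: "group_hom G (G Mod N) (\<lambda>a. N #> a)"
    using h grp by (simp add: group_hom_def group_hom_axioms_def is_group)
  let ?p = "\<lambda>a. N #> a"
  have px: "?p x \<in> carrier (G Mod N)" "?p y \<in> carrier (G Mod N)" using x y by (auto simp: carrier_FactGroup)
  have "?p (x \<otimes> y \<otimes> inv x \<otimes> inv y) =
        ?p x \<otimes>\<^bsub>G Mod N\<^esub> ?p y \<otimes>\<^bsub>G Mod N\<^esub> inv\<^bsub>G Mod N\<^esub> (?p x) \<otimes>\<^bsub>G Mod N\<^esub> inv\<^bsub>G Mod N\<^esub> (?p y)"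
    using x y group_hom.hom_inv[OF gh] group_hom.hom_mult[OF gh] by simp
  also have "\<dots> = \<one>\<^bsub>G Mod N\<^esub>"
    using group.comm_comm_one[OF grp px c] .
  finally have "N #> (x \<otimes> y \<otimes> inv x \<otimes> inv y) = N" by simp
  then show ?thesis using rcos_eq_N[OF N] x y by simp
qed

end


fun esumP :: "('a \<Rightarrow> bool) \<Rightarrow> 'a word \<Rightarrow> int" where
  "esumP P [] = 0"
| "esumP P ((x, b) # w) = (if P x then (if b then 1 else -1) else 0) + esumP P w"

lemma esumP_append[simp]: "esumP P (u @ v) = esumP P u + esumP P v"
proof (induction u)
  case Nil then show ?case by simp
next
  case (Cons a u) then show ?case by (cases a) simp
qed

lemma (in comm_group) evw_pow2:
  assumes ga: "ga \<in> carrier G" and gb: "gb \<in> carrier G"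
    and g: "\<forall>x\<in>S. (P x \<longrightarrow> g x = ga) \<and> (\<not> P x \<longrightarrow> g x = gb)"
  shows "w \<in> words S \<Longrightarrow> evw G g w = ga [^] esumP P w \<otimes> gb [^] esumP (\<lambda>x. \<not> P x) w"
proof (induction w)
  case Nil then show ?case by simp
next
  case (Cons a w)
  obtain x b where a: "a = (x, b)" by (cases a)
  have x: "x \<in> S" and w: "w \<in> words S" using Cons.prems a by auto
  have IH: "evw G g w = ga [^] esumP P w \<otimes> gb [^] esumP (\<lambda>x. \<not> P x) w" using Cons w by simp
  let ?e1 = "esumP P w" and ?e2 = "esumP (\<lambda>x. \<not> P x) w"
  have pw: "h [^] (1 + e) = h \<otimes> h [^] e" "h [^] (-1 + e) = inv h \<otimes> h [^] e"
    "h [^] (e - 1) = inv h \<otimes> h [^] e" "h [^] (e + 1) = h \<otimes> h [^] e" if h: "h \<in> carrier G" for h and e :: int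
  proof -
    show 1: "h [^] (1 + e) = h \<otimes> h [^] e" by (subst int_pow_mult[OF h]) (simp add: h)
    show 2: "h [^] (-1 + e) = inv h \<otimes> h [^] e" by (subst int_pow_mult[OF h]) (simp add: h int_pow_neg)
    show "h [^] (e - 1) = inv h \<otimes> h [^] e" using 2 by (simp add: add.commute)
    show "h [^] (e + 1) = h \<otimes> h [^] e" using 1 by (simp add: add.commute)
  qed
  note p1 = pw[OF ga, of ?e1] and p2 = pw[OF gb, of ?e2]
  show ?case
  proof (cases "P x")
    case True
    then have "g x = ga" using g x by blast
    then show ?thesis using True a IH p1 ga gb by (auto simp: m_assoc)
  next
    case False
    then have "g x = gb" using g x by blast
    then show ?thesis using False a IH p2 ga gb by (auto simp: m_assoc m_lcomm)
  qed
qed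

lemma alt_words: "s \<in> S \<Longrightarrow> t \<in> S \<Longrightarrow> alt s t n \<in> words S"
  by (induction n arbitrary: s t) auto

lemma alt_snoc: "alt s t (Suc n) = alt s t n @ [(if even n then s else t, True)]"
  by (induction n arbitrary: s t) auto

lemma lc2: "lower_central G 2 = generate G {x \<otimes>\<^bsub>G\<^esub> y \<otimes>\<^bsub>G\<^esub> inv\<^bsub>G\<^esub> x \<otimes>\<^bsub>G\<^esub> inv\<^bsub>G\<^esub> y | x y. x \<in> carrier G \<and> y \<in> carrier G}"
  by (simp add: numeral_2_eq_2)

lemma lc3: "lower_central G 3 = generate G {x \<otimes>\<^bsub>G\<^esub> y \<otimes>\<^bsub>G\<^esub> inv\<^bsub>G\<^esub> x \<otimes>\<^bsub>G\<^esub> inv\<^bsub>G\<^esub> y | x y. x \<in> carrier G \<and> y \<in> lower_central G 2}"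
  by (simp add: numeral_3_eq_3 numeral_2_eq_2)

context group
begin

lemma lc2_derived: "lower_central G 2 = derived G (carrier G)"
  unfolding lc2 derived_def by (rule arg_cong[where f="generate G"]) blast

lemma lc2_normal: "lower_central G 2 \<lhd> G"
  unfolding lc2_derived by (rule derived_self_is_normal)

lemma lc2_subgroup: "subgroup (lower_central G 2) G"
  using lc2_normal normal_imp_subgroup by blast

lemma comm_in_lc2: "x \<in> carrier G \<Longrightarrow> y \<in> carrier G \<Longrightarrow> x \<otimes> y \<otimes> inv x \<otimes> inv y \<in> lower_central G 2"
  unfolding lc2 by (rule generate.incl) blast

lemma lc3_normal: "lower_central G 3 \<lhd> G"
proof -
  interpret H: normal "lower_central G 2" G by (rule lc2_normal)
  have sub: "{x \<otimes> y \<otimes> inv x \<otimes> inv y | x y. x \<in> carrier G \<and> y \<in> lower_central G 2} \<subseteq> carrier G"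
    using H.subset by auto
  show ?thesis
    unfolding lc3
  proof (rule normal_generateI[OF sub])
    fix h g assume "h \<in> {x \<otimes> y \<otimes> inv x \<otimes> inv y | x y. x \<in> carrier G \<and> y \<in> lower_central G 2}"
      and g: "g \<in> carrier G"
    then obtain h1 h2 where h: "h1 \<in> carrier G" "h2 \<in> lower_central G 2" "h = h1 \<otimes> h2 \<otimes> inv h1 \<otimes> inv h2"
      by auto
    hence in_carrier: "h1 \<in> carrier G" "h2 \<in> carrier G" "g \<in> carrier G"
      using H.subset g by auto
    have "g \<otimes> h \<otimes> inv g =
           g \<otimes> h1 \<otimes> (inv g \<otimes> g) \<otimes> h2 \<otimes> (inv g \<otimes> g) \<otimes> inv h1 \<otimes> (inv g \<otimes> g) \<otimes> inv h2 \<otimes> inv g"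
      unfolding h(3) by (simp add: in_carrier m_assoc)
    also have " ... =
          (g \<otimes> h1 \<otimes> inv g) \<otimes> (g \<otimes> h2 \<otimes> inv g) \<otimes> (g \<otimes> inv h1 \<otimes> inv g) \<otimes> (g \<otimes> inv h2 \<otimes> inv g)"
      using in_carrier m_assoc inv_closed m_closed by presburger
    finally have "g \<otimes> h \<otimes> inv g =
          (g \<otimes> h1 \<otimes> inv g) \<otimes> (g \<otimes> h2 \<otimes> inv g) \<otimes> inv (g \<otimes> h1 \<otimes> inv g) \<otimes> inv (g \<otimes> h2 \<otimes> inv g)"
      by (simp add: in_carrier inv_mult_group m_assoc)
    moreover have "g \<otimes> h2 \<otimes> inv g \<in> lower_central G 2" using H.inv_op_closed2[OF g h(2)] .
    moreover have "g \<otimes> h1 \<otimes> inv g \<in> carrier G" using in_carrier by simp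
    ultimately show "g \<otimes> h \<otimes> inv g \<in> {x \<otimes> y \<otimes> inv x \<otimes> inv y | x y. x \<in> carrier G \<and> y \<in> lower_central G 2}"
      by blast
  qed
qed

lemma comm_in_lc3: "x \<in> carrier G \<Longrightarrow> y \<in> lower_central G 2 \<Longrightarrow> x \<otimes> y \<otimes> inv x \<otimes> inv y \<in> lower_central G 3"
  unfolding lc3 by (rule generate.incl) blast

lemma lc3_sub_lc2: "lower_central G 3 \<subseteq> lower_central G 2"
proof -
  have "{x \<otimes> y \<otimes> inv x \<otimes> inv y | x y. x \<in> carrier G \<and> y \<in> lower_central G 2} \<subseteq> lower_central G 2"
    using comm_in_lc2 lc2_subgroup subgroup.subset by blast
  then show ?thesis unfolding lc3 by (rule generate_subgroup_incl[OF _ lc2_subgroup])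
qed

lemma lc2_sub_N: "subgroup N G \<Longrightarrow> (\<And>x y. x \<in> carrier G \<Longrightarrow> y \<in> carrier G \<Longrightarrow> x \<otimes> y \<otimes> inv x \<otimes> inv y \<in> N)
   \<Longrightarrow> lower_central G 2 \<subseteq> N"
  unfolding lc2 by (rule generate_subgroup_incl) auto

lemma comm_rcos: "N \<lhd> G \<Longrightarrow> x \<in> carrier G \<Longrightarrow> y \<in> carrier G \<Longrightarrow> x \<otimes> y \<otimes> inv x \<otimes> inv y \<in> N
   \<Longrightarrow> N #> (x \<otimes> y) = N #> (y \<otimes> x)"
proof -
  assume N: "N \<lhd> G" and xy: "x \<in> carrier G" "y \<in> carrier G" and c0N: "x \<otimes> y \<otimes> inv x \<otimes> inv y \<in> N"
  interpret N: normal N G by (rule N)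
  define c0 where "c0 = x \<otimes> y \<otimes> inv x \<otimes> inv y"
  have c0: "c0 \<in> carrier G" using c0N N.subset by (auto simp: c0_def)
  have "x \<otimes> y = c0 \<otimes> (y \<otimes> x)" using xy comm_decomp by (simp add: c0_def)
  then have "N #> (x \<otimes> y) = (N #> c0) #> (y \<otimes> x)"
    using coset_mult_assoc[OF N.subset c0] xy by simp
  also have "\<dots> = N #> (y \<otimes> x)" using coset_join2[OF c0 N.subgroup_axioms] c0N by (simp add: c0_def)
  finally show ?thesis .
qed

lemma swap4:
  assumes c: "a \<in> carrier G" "b \<in> carrier G" "c \<in> carrier G" "d \<in> carrier G"
    and ab: "a \<otimes> b = b \<otimes> a" and cb: "c \<otimes> b = b \<otimes> c" and cd: "c \<otimes> d = d \<otimes> c" and da: "d \<otimes> a = a \<otimes> d"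
  shows "(a \<otimes> c) \<otimes> (b \<otimes> d) = (b \<otimes> d) \<otimes> (a \<otimes> c)"
proof -
  have "(a \<otimes> c) \<otimes> (b \<otimes> d) = a \<otimes> (c \<otimes> b) \<otimes> d" using c by (simp add: m_assoc)
  also have "\<dots> = (a \<otimes> b) \<otimes> (c \<otimes> d)" using c cb by (simp add: m_assoc)
  also have "\<dots> = (b \<otimes> a) \<otimes> (d \<otimes> c)" using ab cd by simp
  also have "\<dots> = b \<otimes> (a \<otimes> d) \<otimes> c" using c by (simp add: m_assoc)
  also have "\<dots> = b \<otimes> (d \<otimes> a) \<otimes> c" using da by simp
  also have "\<dots> = (b \<otimes> d) \<otimes> (a \<otimes> c)" using c by (simp add: m_assoc)
  finally show ?thesis .
qed

end

context cox
begin

sublocale A: pres S "braid_rels S M"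
  by unfold_locales (auto simp: braid_rels_def alt_words)

abbreviation GA where "GA \<equiv> artin_tits_group S M"

lemma GA_def': "GA = A.G" by (simp add: artin_tits_group_def)

lemma group_GA: "group GA" unfolding GA_def' by (rule A.group_G)

definition gen :: "'a \<Rightarrow> 'a word set" where "gen s = A.cl [(s, True)]"

lemma gen_carrier: "s \<in> S \<Longrightarrow> gen s \<in> carrier GA"
  unfolding gen_def GA_def' by simp

lemma gen_img: "gen ` S \<subseteq> carrier GA" using gen_carrier by auto

lemma cl_evw: "w \<in> words S \<Longrightarrow> A.cl w = evw GA gen w"
proof (induction w)
  case Nil then show ?case by (simp add: GA_def' A.one_G)
next
  case (Cons a w)
  obtain x b where a: "a = (x, b)" by (cases a)
  have x: "x \<in> S" and w: "w \<in> words S" using Cons.prems a by auto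
  have "A.cl (a # w) = A.cl [(x, b)] \<otimes>\<^bsub>A.G\<^esub> A.cl w" using A.cl_Cons[of a w] x w a by simp
  moreover have "A.cl [(x, b)] = (if b then gen x else inv\<^bsub>A.G\<^esub> (gen x))"
    using A.cl_False[OF x] by (cases b) (auto simp: gen_def)
  ultimately show ?case using Cons w a by (simp add: GA_def')
qed

lemma carrier_GA: "carrier GA = evw GA gen ` words S"
  using cl_evw A.carrier_G by (auto simp: GA_def')

lemma odd_conj:
  assumes st: "(s, t) \<in> Od"
  shows "\<exists>g\<in>carrier GA. gen t = g \<otimes>\<^bsub>GA\<^esub> gen s \<otimes>\<^bsub>GA\<^esub> inv\<^bsub>GA\<^esub> g"
proof -
  interpret GA: group GA by (rule group_GA)
  from st have s: "s \<in> S" and t: "t \<in> S" and ne: "s \<noteq> t" and o: "odd (M s t)"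
    by (auto simp: Od_def)
  obtain k where k: "M s t = Suc (2 * k)" using o oddE by (metis Suc_eq_plus1)
  have m0: "M s t \<noteq> 0" using k by simp
  have rel: "(alt s t (M s t), alt t s (M s t)) \<in> braid_rels S M"
    using s t ne m0 unfolding braid_rels_def by blast
  have e1: "alt s t (M s t) = alt s t (2 * k) @ [(s, True)]" using k alt_snoc[of s t "2 * k"] by simp
  have e2: "alt t s (M s t) = (t, True) # alt s t (2 * k)" using k by simp
  define g where "g = A.cl (alt s t (2 * k))"
  have gc: "g \<in> carrier GA" using alt_words[OF s t] by (simp add: g_def GA_def')
  have "g \<otimes>\<^bsub>GA\<^esub> gen s = gen t \<otimes>\<^bsub>GA\<^esub> g"
    using A.cl_rel[OF rel] alt_words[OF s t] s t
    unfolding e1 e2 g_def gen_def GA_def' by (simp add: A.mult_G)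
  then have "gen t = g \<otimes>\<^bsub>GA\<^esub> gen s \<otimes>\<^bsub>GA\<^esub> inv\<^bsub>GA\<^esub> g"
    using gc gen_carrier[OF s] gen_carrier[OF t] by (simp add: GA.m_assoc)
  then show ?thesis using gc by blast
qed

lemma two_comm:
  assumes u: "u \<in> S" and v: "v \<in> S" and m: "M u v = 2"
  shows "gen u \<otimes>\<^bsub>GA\<^esub> gen v = gen v \<otimes>\<^bsub>GA\<^esub> gen u"
proof -
  have ne: "u \<noteq> v" using m M_self[OF u] by auto
  have rel: "(alt u v (M u v), alt v u (M u v)) \<in> braid_rels S M"
    using u v ne m unfolding braid_rels_def by force
  have "alt u v (M u v) = [(u, True), (v, True)]" "alt v u (M u v) = [(v, True), (u, True)]"
    using m by (simp_all add: numeral_2_eq_2)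
  then show ?thesis using A.cl_rel[OF rel] u v
    unfolding gen_def GA_def' by (simp add: A.mult_G)
qed

end

context cox
begin

lemma class_diff:
  assumes "(u, s) \<in> Od\<^sup>*" and u: "u \<in> S"
  shows "\<exists>d\<in>lower_central GA 2. gen s = gen u \<otimes>\<^bsub>GA\<^esub> d"
  using assms(1)
proof (induction rule: rtrancl_induct)
  case base
  interpret GA: group GA by (rule group_GA)
  have "\<one>\<^bsub>GA\<^esub> \<in> lower_central GA 2" using GA.lc2_subgroup subgroup.one_closed by blast
  then show ?case using gen_carrier[OF u] by force
next
  case (step s s')
  interpret GA: group GA by (rule group_GA)
  obtain d where d: "d \<in> lower_central GA 2" "gen s = gen u \<otimes>\<^bsub>GA\<^esub> d" using step by blast
  have s: "s \<in> S" and s': "s' \<in> S" using step(2) by (auto simp: Od_def)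
  obtain g where g: "g \<in> carrier GA" "gen s' = g \<otimes>\<^bsub>GA\<^esub> gen s \<otimes>\<^bsub>GA\<^esub> inv\<^bsub>GA\<^esub> g"
    using odd_conj[OF step(2)] by blast
  have gs: "gen s \<in> carrier GA" using gen_carrier[OF s] .
  define e where "e = inv\<^bsub>GA\<^esub> (gen s) \<otimes>\<^bsub>GA\<^esub> g \<otimes>\<^bsub>GA\<^esub> inv\<^bsub>GA\<^esub> (inv\<^bsub>GA\<^esub> (gen s)) \<otimes>\<^bsub>GA\<^esub> inv\<^bsub>GA\<^esub> g"
  have eN: "e \<in> lower_central GA 2" unfolding e_def by (rule GA.comm_in_lc2[OF GA.inv_closed[OF gs] g(1)])
  have dc: "d \<in> carrier GA" using d GA.lc2_subgroup subgroup.subset by blast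
  have ec: "e \<in> carrier GA" using eN GA.lc2_subgroup subgroup.subset by blast
  have "gen s \<otimes>\<^bsub>GA\<^esub> e = g \<otimes>\<^bsub>GA\<^esub> gen s \<otimes>\<^bsub>GA\<^esub> inv\<^bsub>GA\<^esub> g"
    unfolding e_def using gs g by (simp add: GA.m_assoc GA.inv_cancel_l2)
  then have "gen s' = gen s \<otimes>\<^bsub>GA\<^esub> e" using g(2) by simp
  also have "\<dots> = (gen u \<otimes>\<^bsub>GA\<^esub> d) \<otimes>\<^bsub>GA\<^esub> e" using d(2) by simp
  also have "\<dots> = gen u \<otimes>\<^bsub>GA\<^esub> (d \<otimes>\<^bsub>GA\<^esub> e)"
    by (rule GA.m_assoc[OF gen_carrier[OF u] dc ec])
  finally have "gen s' = gen u \<otimes>\<^bsub>GA\<^esub> (d \<otimes>\<^bsub>GA\<^esub> e)" .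
  moreover have "d \<otimes>\<^bsub>GA\<^esub> e \<in> lower_central GA 2" by (rule subgroup.m_closed[OF GA.lc2_subgroup d(1) eN])
  ultimately show ?case by blast
qed


lemma part2:
  assumes finW: "finite (carrier (coxeter_group S M))"
    and irr: "coxeter_irreducible S M"
    and h5: "\<not> (card S = 2 \<and> (\<forall>s\<in>S. \<forall>t\<in>S. s \<noteq> t \<longrightarrow> even (M s t)))"
  shows "lower_central GA 2 = lower_central GA 3"
proof -
  interpret GA: group GA by (rule group_GA)
  have Nn: "lower_central GA 3 \<lhd> GA" by (rule GA.lc3_normal)
  interpret N: normal "lower_central GA 3" GA by (rule Nn)
  interpret Q: group "GA Mod lower_central GA 3" by (rule N.factorgroup_is_group)
  have ph: "(\<lambda>x. lower_central GA 3 #>\<^bsub>GA\<^esub> x) \<in> hom GA (GA Mod lower_central GA 3)"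
    by (rule N.r_coset_hom_Mod)
  interpret h: group_hom GA "GA Mod lower_central GA 3" "\<lambda>x. lower_central GA 3 #>\<^bsub>GA\<^esub> x"
    by (simp add: group_hom_def group_hom_axioms_def GA.is_group Q.is_group ph)
  let ?N = "lower_central GA 3"
  let ?Q = "GA Mod lower_central GA 3"
  let ?p = "\<lambda>x. lower_central GA 3 #>\<^bsub>GA\<^esub> x"
  have l2c: "z \<in> carrier GA" if "z \<in> lower_central GA 2" for z
    using that GA.lc2_subgroup subgroup.subset by blast
  have central: "?p x \<otimes>\<^bsub>?Q\<^esub> ?p z = ?p z \<otimes>\<^bsub>?Q\<^esub> ?p x"
    if c: "z \<in> lower_central GA 2" and x: "x \<in> carrier GA" for z x
  proof -
    have "?p x \<otimes>\<^bsub>?Q\<^esub> ?p z = ?p (x \<otimes>\<^bsub>GA\<^esub> z)" using h.hom_mult[OF x l2c[OF c]] by simp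
    also have "\<dots> = ?p (z \<otimes>\<^bsub>GA\<^esub> x)"
      by (rule GA.comm_rcos[OF Nn x l2c[OF c] GA.comm_in_lc3[OF x c]])
    also have "\<dots> = ?p z \<otimes>\<^bsub>?Q\<^esub> ?p x" using h.hom_mult[OF l2c[OF c] x] by simp
    finally show ?thesis .
  qed
  have pg: "?p (gen s) \<in> carrier ?Q" if "s \<in> S" for s
    using h.hom_closed[OF gen_carrier[OF that]] .
  have pd: "?p d \<in> carrier ?Q" if "d \<in> lower_central GA 2" for d
    using h.hom_closed[OF l2c[OF that]] .
  have key: "?p (gen s) \<otimes>\<^bsub>?Q\<^esub> ?p (gen t) = ?p (gen t) \<otimes>\<^bsub>?Q\<^esub> ?p (gen s)"
    if s: "s \<in> S" and t: "t \<in> S" for s t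
  proof (cases "(s, t) \<in> Od\<^sup>*")
    case True
    obtain d where d: "d \<in> lower_central GA 2" "gen t = gen s \<otimes>\<^bsub>GA\<^esub> d"
      using class_diff[OF True s] by blast
    have pt: "?p (gen t) = ?p (gen s) \<otimes>\<^bsub>?Q\<^esub> ?p d"
      using d(2) h.hom_mult[OF gen_carrier[OF s] l2c[OF d(1)]] by simp
    have cc: "?p d \<otimes>\<^bsub>?Q\<^esub> ?p (gen s) = ?p (gen s) \<otimes>\<^bsub>?Q\<^esub> ?p d"
      using central[OF d(1) gen_carrier[OF s]] by simp
    have e: "(?p (gen s) \<otimes>\<^bsub>?Q\<^esub> ?p d) \<otimes>\<^bsub>?Q\<^esub> ?p (gen s)
       = ?p (gen s) \<otimes>\<^bsub>?Q\<^esub> (?p d \<otimes>\<^bsub>?Q\<^esub> ?p (gen s))"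
      by (rule Q.m_assoc[OF pg[OF s] pd[OF d(1)] pg[OF s]])
    show ?thesis unfolding pt e cc by (rule HOL.refl)
  next
    case False
    obtain u v where uv: "u \<in> S" "v \<in> S" "(s, u) \<in> Od\<^sup>*" "(t, v) \<in> Od\<^sup>*" "M u v = 2"
      using commuting_pair[OF finW irr h5 s t False] by blast
    obtain d1 where d1: "d1 \<in> lower_central GA 2" "gen s = gen u \<otimes>\<^bsub>GA\<^esub> d1"
      using class_diff[OF Od_rtrancl_sym[OF uv(3)] uv(1)] by blast
    obtain d2 where d2: "d2 \<in> lower_central GA 2" "gen t = gen v \<otimes>\<^bsub>GA\<^esub> d2"
      using class_diff[OF Od_rtrancl_sym[OF uv(4)] uv(2)] by blast
    have ps: "?p (gen s) = ?p (gen u) \<otimes>\<^bsub>?Q\<^esub> ?p d1"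
      using d1(2) h.hom_mult[OF gen_carrier[OF uv(1)] l2c[OF d1(1)]] by simp
    have pt: "?p (gen t) = ?p (gen v) \<otimes>\<^bsub>?Q\<^esub> ?p d2"
      using d2(2) h.hom_mult[OF gen_carrier[OF uv(2)] l2c[OF d2(1)]] by simp
    have ab: "?p (gen u) \<otimes>\<^bsub>?Q\<^esub> ?p (gen v) = ?p (gen v) \<otimes>\<^bsub>?Q\<^esub> ?p (gen u)"
      using two_comm[OF uv(1,2,5)] h.hom_mult[OF gen_carrier[OF uv(1)] gen_carrier[OF uv(2)]]
        h.hom_mult[OF gen_carrier[OF uv(2)] gen_carrier[OF uv(1)]] by simp
    have cb: "?p d1 \<otimes>\<^bsub>?Q\<^esub> ?p (gen v) = ?p (gen v) \<otimes>\<^bsub>?Q\<^esub> ?p d1"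
      using central[OF d1(1) gen_carrier[OF uv(2)]] by simp
    have cd: "?p d1 \<otimes>\<^bsub>?Q\<^esub> ?p d2 = ?p d2 \<otimes>\<^bsub>?Q\<^esub> ?p d1"
      using central[OF d1(1) l2c[OF d2(1)]] by simp
    have da: "?p d2 \<otimes>\<^bsub>?Q\<^esub> ?p (gen u) = ?p (gen u) \<otimes>\<^bsub>?Q\<^esub> ?p d2"
      using central[OF d2(1) gen_carrier[OF uv(1)]] by simp
    show ?thesis unfolding ps pt
      by (rule Q.swap4[OF pg[OF uv(1)] pg[OF uv(2)] pd[OF d1(1)] pd[OF d2(1)] ab cb cd da])
  qed
  have img: "((\<lambda>x. lower_central GA 3 #>\<^bsub>GA\<^esub> x) \<circ> gen) ` S \<subseteq> carrier ?Q"
    using pg by auto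
  have allc: "x \<otimes>\<^bsub>GA\<^esub> y \<otimes>\<^bsub>GA\<^esub> inv\<^bsub>GA\<^esub> x \<otimes>\<^bsub>GA\<^esub> inv\<^bsub>GA\<^esub> y \<in> ?N"
    if x: "x \<in> carrier GA" and y: "y \<in> carrier GA" for x y
  proof -
    obtain u where u: "u \<in> words S" "x = evw GA gen u" using x carrier_GA by auto
    obtain v where v: "v \<in> words S" "y = evw GA gen v" using y carrier_GA by auto
    have px: "?p x = evw ?Q ((\<lambda>x. lower_central GA 3 #>\<^bsub>GA\<^esub> x) \<circ> gen) u"
      using GA.evw_hom[OF ph Q.is_group gen_img u(1)] u(2) by simp
    have py: "?p y = evw ?Q ((\<lambda>x. lower_central GA 3 #>\<^bsub>GA\<^esub> x) \<circ> gen) v"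
      using GA.evw_hom[OF ph Q.is_group gen_img v(1)] v(2) by simp
    have "\<forall>s\<in>S. \<forall>t\<in>S. ((\<lambda>x. lower_central GA 3 #>\<^bsub>GA\<^esub> x) \<circ> gen) s \<otimes>\<^bsub>?Q\<^esub> ((\<lambda>x. lower_central GA 3 #>\<^bsub>GA\<^esub> x) \<circ> gen) t
         = ((\<lambda>x. lower_central GA 3 #>\<^bsub>GA\<^esub> x) \<circ> gen) t \<otimes>\<^bsub>?Q\<^esub> ((\<lambda>x. lower_central GA 3 #>\<^bsub>GA\<^esub> x) \<circ> gen) s"
      using key by simp
    then have "?p x \<otimes>\<^bsub>?Q\<^esub> ?p y = ?p y \<otimes>\<^bsub>?Q\<^esub> ?p x"
      unfolding px py by (rule Q.evw_commute[OF img _ v(1) u(1)])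
    then show ?thesis by (rule GA.comm_in_N[OF Nn x y])
  qed
  have "lower_central GA 2 \<subseteq> ?N"
    by (rule GA.lc2_sub_N[OF N.subgroup_axioms allc])
  with GA.lc3_sub_lc2 show ?thesis by blast
qed

end

lemma esumP_False[simp]: "esumP (\<lambda>x. False) w = 0"
proof (induction w)
  case Nil then show ?case by simp
next
  case (Cons a w) then show ?case by (cases a) simp
qed

lemma esumP_True_alt: "esumP P (alt s t n) = esumP P (alt t s n)" if "P s = P t \<or> even n"
  using that
proof (induction n arbitrary: s t rule: less_induct)
  case (less n)
  show ?case
  proof (cases n)
    case 0 then show ?thesis by simp
  next
    case (Suc n1)
    show ?thesis
    proof (cases "P s = P t")
      case True
      then have "esumP P (alt t s n1) = esumP P (alt s t n1)" using less Suc by simp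
      then show ?thesis using Suc True by simp
    next
      case False
      then have ev: "even n" using less by simp
      then obtain n2 where n2: "n = Suc (Suc n2)" using Suc by (cases n1) auto
      have "even n2" using ev n2 by simp
      then have "esumP P (alt s t n2) = esumP P (alt t s n2)" using less n2 by simp
      then show ?thesis using n2 by simp
    qed
  qed
qed

definition pw :: "'a \<Rightarrow> int \<Rightarrow> 'a word" where
  "pw x n = (if 0 \<le> n then replicate (nat n) (x, True) else replicate (nat (- n)) (x, False))"

lemma esumP_rep: "esumP P (replicate k (x, b)) = (if P x then (if b then int k else - int k) else 0)"
  by (induction k) auto

lemma esumP_pw: "esumP P (pw x n) = (if P x then n else 0)"
  by (auto simp: pw_def esumP_rep)

lemma pw_words: "x \<in> S \<Longrightarrow> pw x n \<in> words S"
  by (auto simp: pw_def words_def)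

context cox
begin

lemma esumP_pres:
  assumes resp: "\<And>s t. (s, t) \<in> Od \<Longrightarrow> P s = P t"
  shows "(u, v) \<in> pres_eq S (braid_rels S M) \<Longrightarrow> esumP P u = esumP P v"
proof (induction rule: pres_eq.induct)
  case (rel l r u v)
  then obtain s t where st: "s \<in> S" "t \<in> S" "s \<noteq> t" "M s t \<noteq> 0" "l = alt s t (M s t)" "r = alt t s (M s t)"
    unfolding braid_rels_def by blast
  have "P s = P t \<or> even (M s t)"
  proof (cases "even (M s t)")
    case False
    then have "(s, t) \<in> Od" using st by (auto simp: Od_def)
    then show ?thesis using resp by blast
  qed simp
  then have "esumP P l = esumP P r" using st esumP_True_alt by simp
  then show ?case by simp
qed auto

lemma carrier_GA_cl: "carrier GA = A.cl ` words S"
  using A.carrier_G by (simp add: artin_tits_group_def)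

definition phiP :: "('a \<Rightarrow> bool) \<Rightarrow> 'a word set \<Rightarrow> int" where
  "phiP P Y = esumP P (SOME w. w \<in> Y)"

lemma phi_cl:
  assumes resp: "\<And>s t. (s, t) \<in> Od \<Longrightarrow> P s = P t" and w: "w \<in> words S"
  shows "phiP P (A.cl w) = esumP P w"
proof -
  have "w \<in> A.cl w" by (rule A.mem_cl_self[OF w])
  then have "(SOME w'. w' \<in> A.cl w) \<in> A.cl w" by (rule someI)
  then have "(w, SOME w'. w' \<in> A.cl w) \<in> pres_eq S (braid_rels S M)" by (simp add: A.cl_def)
  then show ?thesis using esumP_pres[OF resp] by (simp add: phiP_def)
qed

lemma phi_hom:
  assumes resp: "\<And>s t. (s, t) \<in> Od \<Longrightarrow> P s = P t"
  shows "phiP P \<in> hom GA integer_group"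
proof -
  have "phiP P (x \<otimes>\<^bsub>GA\<^esub> y) = phiP P x + phiP P y" if xc: "x \<in> carrier GA" and yc: "y \<in> carrier GA" for x y
  proof -
    obtain u where u: "x = A.cl u" "u \<in> words S" using xc unfolding carrier_GA_cl by (rule imageE)
    obtain v where v: "y = A.cl v" "v \<in> words S" using yc unfolding carrier_GA_cl by (rule imageE)
    note uv = u(2) v(2) u(1) v(1)
    then show ?thesis using phi_cl[OF resp] by (simp add: GA_def' A.mult_G)
  qed
  then show ?thesis by (auto simp: hom_def)
qed

lemma psi_hom:
  assumes resp: "\<And>s t. (s, t) \<in> Od \<Longrightarrow> P s = P t"
  shows "(\<lambda>Y. (phiP P Y, phiP (\<lambda>x. \<not> P x) Y)) \<in> hom GA (integer_group \<times>\<times> integer_group)"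
proof -
  have resp2: "\<And>s t. (s, t) \<in> Od \<Longrightarrow> (\<not> P s) = (\<not> P t)" using resp by blast
  have "phiP P (x \<otimes>\<^bsub>GA\<^esub> y) = phiP P x + phiP P y \<and>
        phiP (\<lambda>x. \<not> P x) (x \<otimes>\<^bsub>GA\<^esub> y) = phiP (\<lambda>x. \<not> P x) x + phiP (\<lambda>x. \<not> P x) y"
    if xc: "x \<in> carrier GA" and yc: "y \<in> carrier GA" for x y
  proof -
    obtain u where u: "x = A.cl u" "u \<in> words S" using xc unfolding carrier_GA_cl by (rule imageE)
    obtain v where v: "y = A.cl v" "v \<in> words S" using yc unfolding carrier_GA_cl by (rule imageE)
    note uv = u(2) v(2) u(1) v(1)
    then show ?thesis using phi_cl[OF resp] phi_cl[OF resp2] by (simp add: GA_def' A.mult_G)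
  qed
  then show ?thesis by (auto simp: hom_def)
qed

end

context cox
begin

lemma kernel_lc2:
  assumes H: "comm_group H" and hh: "h \<in> hom GA H"
    and a: "a \<in> S" and b: "b \<in> S"
    and cls: "\<forall>x\<in>S. (P x \<longrightarrow> (a, x) \<in> Od\<^sup>*) \<and> (\<not> P x \<longrightarrow> (b, x) \<in> Od\<^sup>*)"
    and zero: "\<And>w. w \<in> words S \<Longrightarrow> h (A.cl w) = \<one>\<^bsub>H\<^esub> \<Longrightarrow> esumP P w = 0 \<and> esumP (\<lambda>x. \<not> P x) w = 0"
  shows "kernel GA H h = lower_central GA 2"
proof -
  interpret GA: group GA by (rule group_GA)
  interpret H: comm_group H by (rule H)
  interpret hg: group_hom GA H h
    by (simp add: group_hom_def group_hom_axioms_def GA.is_group H.is_group hh)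
  have N2: "lower_central GA 2 \<lhd> GA" by (rule GA.lc2_normal)
  interpret N2: normal "lower_central GA 2" GA by (rule N2)
  interpret Q: comm_group "GA Mod lower_central GA 2"
    by (rule GA.comm_Mod[OF N2 GA.comm_in_lc2])
  have ph: "(\<lambda>x. lower_central GA 2 #>\<^bsub>GA\<^esub> x) \<in> hom GA (GA Mod lower_central GA 2)"
    by (rule N2.r_coset_hom_Mod)
  interpret p: group_hom GA "GA Mod lower_central GA 2" "\<lambda>x. lower_central GA 2 #>\<^bsub>GA\<^esub> x"
    by (simp add: group_hom_def group_hom_axioms_def GA.is_group Q.is_group ph)
  let ?p = "\<lambda>x. lower_central GA 2 #>\<^bsub>GA\<^esub> x"
  let ?Q = "GA Mod lower_central GA 2"
  have sup: "lower_central GA 2 \<subseteq> kernel GA H h"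
  proof (rule GA.lc2_sub_N[OF hg.subgroup_kernel])
    fix x y assume x: "x \<in> carrier GA" and y: "y \<in> carrier GA"
    have hx: "h x \<in> carrier H" "h y \<in> carrier H" using x y by auto
    have "h (x \<otimes>\<^bsub>GA\<^esub> y \<otimes>\<^bsub>GA\<^esub> inv\<^bsub>GA\<^esub> x \<otimes>\<^bsub>GA\<^esub> inv\<^bsub>GA\<^esub> y)
        = h x \<otimes>\<^bsub>H\<^esub> h y \<otimes>\<^bsub>H\<^esub> inv\<^bsub>H\<^esub> (h x) \<otimes>\<^bsub>H\<^esub> inv\<^bsub>H\<^esub> (h y)"
      using x y by simp
    also have "\<dots> = \<one>\<^bsub>H\<^esub>" by (rule H.comm_comm_one[OF hx H.m_comm[OF hx]])
    finally show "x \<otimes>\<^bsub>GA\<^esub> y \<otimes>\<^bsub>GA\<^esub> inv\<^bsub>GA\<^esub> x \<otimes>\<^bsub>GA\<^esub> inv\<^bsub>GA\<^esub> y \<in> kernel GA H h"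
      using x y by (simp add: kernel_def)
  qed
  have p1: "?p d = \<one>\<^bsub>?Q\<^esub>" if "d \<in> lower_central GA 2" for d
  proof -
    have "d \<in> carrier GA" using that N2.subset by blast
    then show ?thesis using GA.rcos_eq_N[OF N2] that by simp
  qed
  have pcl: "?p (gen x) = ?p (gen a')" if ax: "(a', x) \<in> Od\<^sup>*" and aS: "a' \<in> S" for a' x
  proof -
    obtain d where d: "d \<in> lower_central GA 2" "gen x = gen a' \<otimes>\<^bsub>GA\<^esub> d"
      using class_diff[OF ax aS] by blast
    have dc: "d \<in> carrier GA" using d(1) N2.subset by blast
    have "?p (gen x) = ?p (gen a') \<otimes>\<^bsub>?Q\<^esub> ?p d"
      using d(2) p.hom_mult[OF gen_carrier[OF aS] dc] by simp
    also have "\<dots> = ?p (gen a')" using p1[OF d(1)] p.hom_closed[OF gen_carrier[OF aS]]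
      by (simp only: Q.r_one)
    finally show ?thesis .
  qed
  have sub: "kernel GA H h \<subseteq> lower_central GA 2"
  proof
    fix x assume xk: "x \<in> kernel GA H h"
    then have xc: "x \<in> carrier GA" and hx: "h x = \<one>\<^bsub>H\<^esub>" by (auto simp: kernel_def)
    obtain w where w: "x = A.cl w" "w \<in> words S" using xc unfolding carrier_GA_cl by (rule imageE)
    have e: "esumP P w = 0" "esumP (\<lambda>x. \<not> P x) w = 0" using zero[OF w(2)] hx w(1) by auto
    have img: "((\<lambda>x. lower_central GA 2 #>\<^bsub>GA\<^esub> x) \<circ> gen) ` S \<subseteq> carrier ?Q"
      using p.hom_closed gen_carrier by auto
    have "?p x = evw ?Q ((\<lambda>x. lower_central GA 2 #>\<^bsub>GA\<^esub> x) \<circ> gen) w"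
      using GA.evw_hom[OF ph Q.is_group gen_img w(2)] w cl_evw by simp
    also have "\<dots> = ?p (gen a) [^]\<^bsub>?Q\<^esub> esumP P w \<otimes>\<^bsub>?Q\<^esub> ?p (gen b) [^]\<^bsub>?Q\<^esub> esumP (\<lambda>x. \<not> P x) w"
    proof (rule Q.evw_pow2[OF p.hom_closed[OF gen_carrier[OF a]] p.hom_closed[OF gen_carrier[OF b]] _ w(2)])
      show "\<forall>x\<in>S. (P x \<longrightarrow> ((\<lambda>x. lower_central GA 2 #>\<^bsub>GA\<^esub> x) \<circ> gen) x = ?p (gen a)) \<and>
            (\<not> P x \<longrightarrow> ((\<lambda>x. lower_central GA 2 #>\<^bsub>GA\<^esub> x) \<circ> gen) x = ?p (gen b))"
        using cls pcl a b by simp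
    qed
    also have "\<dots> = \<one>\<^bsub>?Q\<^esub>" unfolding e using p.hom_closed[OF gen_carrier[OF a]] p.hom_closed[OF gen_carrier[OF b]]
      by (simp del: mult_FactGroup one_FactGroup)
    finally have "?p x = lower_central GA 2" by simp
    then show "x \<in> lower_central GA 2" using GA.rcos_eq_N[OF N2 xc] by simp
  qed
  from sup sub show ?thesis by blast
qed

end

lemma comm_group_ZZ: "comm_group (integer_group \<times>\<times> integer_group)"
  by (rule group.group_comm_groupI[OF DirProd_group[OF group_integer_group group_integer_group]])
     (auto simp: add.commute)

theorem proposition2p2:
  fixes S :: "'a set" and M :: "'a \<Rightarrow> 'a \<Rightarrow> nat"
  assumes "finite S"
    and "coxeter_matrix S M"
    and "finite (carrier (coxeter_group S M))"
    and "coxeter_irreducible S M"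
    and "\<not> (card S = 2 \<and> (\<forall>s\<in>S. \<forall>t\<in>S. s \<noteq> t \<longrightarrow> even (M s t)))"
  shows "(artin_tits_group S M Mod lower_central (artin_tits_group S M) 2 \<cong> integer_group
          \<or> artin_tits_group S M Mod lower_central (artin_tits_group S M) 2
              \<cong> integer_group \<times>\<times> integer_group)
       \<and> lower_central (artin_tits_group S M) 2 = lower_central (artin_tits_group S M) 3"
proof -
  interpret cox S M using assms(1,2) by unfold_locales
  interpret GA: group GA by (rule group_GA)
  have ii: "lower_central GA 2 = lower_central GA 3" by (rule part2[OF assms(3,4,5)])
  obtain a where a: "a \<in> S" and cases: "(\<forall>x\<in>S. (a, x) \<in> Od\<^sup>*) \<or>
           (\<exists>b\<in>S. (a, b) \<notin> Od\<^sup>* \<and> (\<forall>x\<in>S. (a, x) \<in> Od\<^sup>* \<or> (b, x) \<in> Od\<^sup>*))"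
    using two_classes[OF assms(3,4)] by blast
  have i: "GA Mod lower_central GA 2 \<cong> integer_group \<or> GA Mod lower_central GA 2 \<cong> integer_group \<times>\<times> integer_group"
    using cases
  proof
    assume all: "\<forall>x\<in>S. (a, x) \<in> Od\<^sup>*"
    let ?P = "\<lambda>x::'a. True"
    have resp: "\<And>s t. (s, t) \<in> Od \<Longrightarrow> ?P s = ?P t" by simp
    have hh: "phiP ?P \<in> hom GA integer_group" by (rule phi_hom[where P="\<lambda>x. True", OF resp])
    interpret hg: group_hom GA integer_group "phiP ?P"
      by (simp add: group_hom_def group_hom_axioms_def GA.is_group hh)
    have ker: "kernel GA integer_group (phiP ?P) = lower_central GA 2"
    proof (rule kernel_lc2[OF abelian_integer_group hh a a])
      show "\<forall>x\<in>S. (?P x \<longrightarrow> (a, x) \<in> Od\<^sup>*) \<and> (\<not> ?P x \<longrightarrow> (a, x) \<in> Od\<^sup>*)" using all by simp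
      fix w assume w: "w \<in> words S" and h0: "phiP ?P (A.cl w) = \<one>\<^bsub>integer_group\<^esub>"
      then show "esumP ?P w = 0 \<and> esumP (\<lambda>x. \<not> ?P x) w = 0" using phi_cl[where P="\<lambda>x. True", OF resp w] by simp
    qed
    have surj: "phiP ?P ` carrier GA = carrier integer_group"
    proof -
      have "n \<in> phiP ?P ` carrier GA" for n
      proof -
        have c: "A.cl (pw a n) \<in> carrier GA" using pw_words[OF a] by (simp add: carrier_GA_cl)
        have e: "phiP ?P (A.cl (pw a n)) = n" using phi_cl[where P="\<lambda>x. True", OF resp pw_words[OF a]] esumP_pw[of "\<lambda>x. True"] by simp
        show ?thesis by (rule image_eqI[where f="phiP ?P", OF e[symmetric] c])
      qed
      then show ?thesis by auto
    qed
    have "GA Mod kernel GA integer_group (phiP ?P) \<cong> integer_group" by (rule hg.FactGroup_iso[OF surj])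
    then show ?thesis using ker by simp
  next
    assume "\<exists>b\<in>S. (a, b) \<notin> Od\<^sup>* \<and> (\<forall>x\<in>S. (a, x) \<in> Od\<^sup>* \<or> (b, x) \<in> Od\<^sup>*)"
    then obtain b where b: "b \<in> S" "(a, b) \<notin> Od\<^sup>*" and two: "\<forall>x\<in>S. (a, x) \<in> Od\<^sup>* \<or> (b, x) \<in> Od\<^sup>*"
      by blast
    let ?P = "\<lambda>x. (a, x) \<in> Od\<^sup>*"
    have resp: "?P s = ?P t" if st: "(s, t) \<in> Od" for s t
    proof
      assume "?P s" then show "?P t" using st by (rule rtrancl_into_rtrancl)
    next
      assume "?P t" then show "?P s" using Od_sym[OF st] by (rule rtrancl_into_rtrancl)
    qed
    let ?h = "\<lambda>Y. (phiP ?P Y, phiP (\<lambda>x. \<not> ?P x) Y)"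
    have hh: "?h \<in> hom GA (integer_group \<times>\<times> integer_group)" by (rule psi_hom[OF resp])
    have resp2: "\<And>s t. (s, t) \<in> Od \<Longrightarrow> (\<not> ?P s) = (\<not> ?P t)" using resp by blast
    interpret ZZ: comm_group "integer_group \<times>\<times> integer_group" by (rule comm_group_ZZ)
    interpret hg: group_hom GA "integer_group \<times>\<times> integer_group" ?h
      by (simp add: group_hom_def group_hom_axioms_def GA.is_group ZZ.is_group hh)
    have ker: "kernel GA (integer_group \<times>\<times> integer_group) ?h = lower_central GA 2"
    proof (rule kernel_lc2[OF comm_group_ZZ hh a b(1)])
      show "\<forall>x\<in>S. (?P x \<longrightarrow> (a, x) \<in> Od\<^sup>*) \<and> (\<not> ?P x \<longrightarrow> (b, x) \<in> Od\<^sup>*)" using two by blast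
      fix w assume w: "w \<in> words S" and h0: "?h (A.cl w) = \<one>\<^bsub>integer_group \<times>\<times> integer_group\<^esub>"
      then show "esumP ?P w = 0 \<and> esumP (\<lambda>x. \<not> ?P x) w = 0"
        using phi_cl[OF resp w] phi_cl[OF resp2 w] by simp
    qed
    have Pa: "?P a" by simp
    have Pb: "\<not> ?P b" using b(2) .
    have surj: "?h ` carrier GA = carrier (integer_group \<times>\<times> integer_group)"
    proof -
      have "(m, n) \<in> ?h ` carrier GA" for m n
      proof -
        have ws: "pw a m @ pw b n \<in> words S" using pw_words[OF a] pw_words[OF b(1)] by simp
        have c: "A.cl (pw a m @ pw b n) \<in> carrier GA" using ws by (simp add: carrier_GA_cl)
        have e: "?h (A.cl (pw a m @ pw b n)) = (m, n)"
          using phi_cl[OF resp ws] phi_cl[OF resp2 ws] Pa Pb by (simp add: esumP_pw)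
        show ?thesis by (rule image_eqI[where f="?h", OF e[symmetric] c])
      qed
      then show ?thesis by auto
    qed
    have "GA Mod kernel GA (integer_group \<times>\<times> integer_group) ?h \<cong> integer_group \<times>\<times> integer_group"
      by (rule hg.FactGroup_iso[OF surj])
    then show ?thesis using ker by simp
  qed
  show ?thesis using i ii by simp
qed

end
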